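(* There is an algorithm that, given $p$, block sizes $m_0,\dots,m_{p-1}\ge0$ and homogeneous parameters $\alpha,\beta,\gamma\ge0$ (i.e. $\alpha_{ij}=\alpha$, $\beta_{ij}=\beta$, $\gamma_i=\gamma$ for all $i,j$), computes a (strongly) ordered communication tree on $\{0,\dots,p-1\}$ whose completion time is minimum among all ordered communication trees on $\{0,\dots,p-1\}$ with any root (no restriction on node degrees), using $O(p^3)$ arithmetic operations and comparisons and $O(p^2)$ space.
   Context: Processors $0,\dots,p-1$ (fully connected, one-ported); processor $i$ has a data block of size $m_i\ge0$; $\mathrm{Size}(R)=\sum_{i\in R}m_i$. Transmitting $s$ units between any two processors costs $\alpha+\beta s$; local copying of $s$ units costs $\gamma s$. A communication tree on a nonempty set $R$ with root $r\in R$ is either trivial ($R=\{r\}$), or the root $r$ with a sequence of entries $(E_0,\dots,E_j)$ where exactly one entry is a "local copy" marker, every other entry is a communication tree on a set $R_t$ with root $r_t$, there is at least one tree entry, and $\{r\}$ together with the $R_t$ partition $R$. Completion time: trivial tree $0$; otherwise $c_{-1}=0$, $c_t=c_{t-1}+\gamma m_r$ for the copy marker, $c_t=\max(c_{t-1},\mathrm{cost}(E_t))+\alpha+\beta\,\mathrm{Size}(R_t)$ for a tree entry; $\mathrm{cost}=c_j$. A communication tree is (strongly) ordered if its set is an interval $[i,\dots,j]$ of consecutive ranks, every tree entry is itself strongly ordered, and, identifying the copy marker with the interval $\{r\}$, the sets of the entries $E_0,\dots,E_j$ are consecutive intervals in increasing order. *)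

theory Defs
  imports Main "HOL.Real"
begin

text \<open>A communication tree: a root together with a list of entries; the entry
  None is the local copy marker, Some t is a subtree entry. The trivial tree
  on a singleton is Node r [].\<close>

datatype ctree = Node nat "ctree option list"

fun ct_root :: "ctree \<Rightarrow> nat" where
  "ct_root (Node r es) = r"

fun ct_verts :: "ctree \<Rightarrow> nat set" where
  "ct_verts (Node r es) =
     insert r (\<Union>x\<in>set es. (case x of None \<Rightarrow> {} | Some t \<Rightarrow> ct_verts t))"

definition entry_set :: "nat \<Rightarrow> ctree option \<Rightarrow> nat set" where
  "entry_set r x = (case x of None \<Rightarrow> {r} | Some t \<Rightarrow> ct_verts t)"

fun ct_wf :: "ctree \<Rightarrow> bool" where
  "ct_wf (Node r es) =
     ((es = [] \<or> (length (filter (\<lambda>x. x = None) es) = 1 \<and> (\<exists>x\<in>set es. x \<noteq> None)))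
      \<and> (\<forall>x\<in>set es. case x of None \<Rightarrow> True | Some t \<Rightarrow> ct_wf t)
      \<and> (\<forall>i j. i < j \<and> j < length es \<longrightarrow> entry_set r (es ! i) \<inter> entry_set r (es ! j) = {}))"

definition is_ctree :: "nat set \<Rightarrow> ctree \<Rightarrow> bool" where
  "is_ctree R T \<longleftrightarrow> ct_wf T \<and> ct_verts T = R"

definition Size :: "(nat \<Rightarrow> real) \<Rightarrow> nat set \<Rightarrow> real" where
  "Size m R = (\<Sum>i\<in>R. m i)"

fun ct_cost :: "(nat \<Rightarrow> real) \<Rightarrow> real \<Rightarrow> real \<Rightarrow> real \<Rightarrow> ctree \<Rightarrow> real" where
  "ct_cost m \<alpha> \<beta> \<gamma> (Node r es) =
     foldl (\<lambda>c x. case x of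
                    None \<Rightarrow> c + \<gamma> * m r
                  | Some t \<Rightarrow> max c (ct_cost m \<alpha> \<beta> \<gamma> t) + \<alpha> + \<beta> * Size m (ct_verts t))
           0 es"

fun consec_intervals :: "nat \<Rightarrow> nat set list \<Rightarrow> bool" where
  "consec_intervals a [] = True"
| "consec_intervals a (S # Ss) = (\<exists>b > a. S = {a..<b} \<and> consec_intervals b Ss)"

fun strongly_ordered :: "ctree \<Rightarrow> bool" where
  "strongly_ordered (Node r es) =
     (consec_intervals (Min (ct_verts (Node r es))) (map (entry_set r) es)
      \<and> (\<forall>x\<in>set es. case x of None \<Rightarrow> True | Some t \<Rightarrow> strongly_ordered t))"

fun ct_edges :: "ctree \<Rightarrow> (nat \<times> nat) set" where
  "ct_edges (Node r es) =
     (\<Union>x\<in>set es. case x of None \<Rightarrow> {} | Some t \<Rightarrow> insert (ct_root t, r) (ct_edges t))"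

text \<open>Integer arithmetic is restricted to addition and subtraction; real
  arithmetic is addition, subtraction, multiplication (real constants are
  integers only); there is no conversion
  from reals to integers other than through comparisons.\<close>

datatype iexp = IC int | IL iexp iexp | IAdd iexp iexp | ISub iexp iexp
datatype rexp = RC int | RL iexp iexp | RAdd rexp rexp | RSub rexp rexp | RMul rexp rexp
datatype bexp = BC bool | ILe iexp iexp | RLe rexp rexp | BNot bexp | BAnd bexp bexp
datatype com = SKIP | IStore iexp iexp iexp | RStore iexp iexp rexp
  | Seq com com | If bexp com com | While bexp com

record state =
  imem :: "int \<times> int \<Rightarrow> int"
  rmem :: "int \<times> int \<Rightarrow> real"
  iused :: "(int \<times> int) set"
  rused :: "(int \<times> int) set"

fun ival :: "iexp \<Rightarrow> state \<Rightarrow> int" where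
  "ival (IC k) s = k"
| "ival (IL a b) s = imem s (ival a s, ival b s)"
| "ival (IAdd a b) s = ival a s + ival b s"
| "ival (ISub a b) s = ival a s - ival b s"

fun rval :: "rexp \<Rightarrow> state \<Rightarrow> real" where
  "rval (RC k) s = of_int k"
| "rval (RL a b) s = rmem s (ival a s, ival b s)"
| "rval (RAdd a b) s = rval a s + rval b s"
| "rval (RSub a b) s = rval a s - rval b s"
| "rval (RMul a b) s = rval a s * rval b s"

fun bval :: "bexp \<Rightarrow> state \<Rightarrow> bool" where
  "bval (BC v) s = v"
| "bval (ILe a b) s = (ival a s \<le> ival b s)"
| "bval (RLe a b) s = (rval a s \<le> rval b s)"
| "bval (BNot b) s = (\<not> bval b s)"
| "bval (BAnd a b) s = (bval a s \<and> bval b s)"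

fun icost :: "iexp \<Rightarrow> nat" where
  "icost (IC k) = 1"
| "icost (IL a b) = 1 + icost a + icost b"
| "icost (IAdd a b) = 1 + icost a + icost b"
| "icost (ISub a b) = 1 + icost a + icost b"

fun rcost :: "rexp \<Rightarrow> nat" where
  "rcost (RC k) = 1"
| "rcost (RL a b) = 1 + icost a + icost b"
| "rcost (RAdd a b) = 1 + rcost a + rcost b"
| "rcost (RSub a b) = 1 + rcost a + rcost b"
| "rcost (RMul a b) = 1 + rcost a + rcost b"

fun bcost :: "bexp \<Rightarrow> nat" where
  "bcost (BC v) = 1"
| "bcost (ILe a b) = 1 + icost a + icost b"
| "bcost (RLe a b) = 1 + rcost a + rcost b"
| "bcost (BNot b) = 1 + bcost b"
| "bcost (BAnd a b) = 1 + bcost a + bcost b"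

inductive exec :: "com \<Rightarrow> state \<Rightarrow> nat \<Rightarrow> state \<Rightarrow> bool" where
  Skip: "exec SKIP s 1 s"
| IStore: "exec (IStore a b e) s (1 + icost a + icost b + icost e)
     (s\<lparr>imem := (imem s)((ival a s, ival b s) := ival e s),
        iused := insert (ival a s, ival b s) (iused s)\<rparr>)"
| RStore: "exec (RStore a b e) s (1 + icost a + icost b + rcost e)
     (s\<lparr>rmem := (rmem s)((ival a s, ival b s) := rval e s),
        rused := insert (ival a s, ival b s) (rused s)\<rparr>)"
| Seq: "exec c1 s t1 s1 \<Longrightarrow> exec c2 s1 t2 s2 \<Longrightarrow> exec (Seq c1 c2) s (t1 + t2) s2"
| IfT: "bval b s \<Longrightarrow> exec c1 s t s' \<Longrightarrow> exec (If b c1 c2) s (1 + bcost b + t) s'"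
| IfF: "\<not> bval b s \<Longrightarrow> exec c2 s t s' \<Longrightarrow> exec (If b c1 c2) s (1 + bcost b + t) s'"
| WhileF: "\<not> bval b s \<Longrightarrow> exec (While b c) s (1 + bcost b) s"
| WhileT: "bval b s \<Longrightarrow> exec c s t1 s1 \<Longrightarrow> exec (While b c) s1 t2 s2 \<Longrightarrow>
     exec (While b c) s (1 + bcost b + t1 + t2) s2"

text \<open>Space used: number of memory cells that ever held data (input cells and
  every cell written). Since these sets only grow, the final value is the maximum.\<close>
definition space :: "state \<Rightarrow> nat" where
  "space s = card (iused s) + card (rused s)"

definition input_state :: "nat \<Rightarrow> (nat \<Rightarrow> real) \<Rightarrow> real \<Rightarrow> real \<Rightarrow> real \<Rightarrow> state" where
  "input_state p m \<alpha> \<beta> \<gamma> =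
     \<lparr> imem = (\<lambda>_. 0)((0,0) := int p),
       rmem = (\<lambda>(a,i). if a = 0 \<and> 0 \<le> i \<and> i < int p then m (nat i)
                       else if a = 1 \<and> i = 0 then \<alpha>
                       else if a = 1 \<and> i = 1 then \<beta>
                       else if a = 1 \<and> i = 2 then \<gamma> else 0),
       iused = {(0,0)},
       rused = {(0, int i) | i. i < p} \<union> {(1,0),(1,1),(1,2)} \<rparr>"

text \<open>Output encoding: the integer cell (1,i), i<p, holds the parent of i in T
  (and -1 for the root). A strongly ordered tree is determined by its parent map.\<close>
definition outputs_tree :: "nat \<Rightarrow> state \<Rightarrow> ctree \<Rightarrow> bool" where
  "outputs_tree p s T \<longleftrightarrow>
     (\<forall>i<p. (i = ct_root T \<longrightarrow> imem s (1, int i) = -1)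
          \<and> (i \<noteq> ct_root T \<longrightarrow> imem s (1, int i) \<ge> 0 \<and> (i, nat (imem s (1, int i))) \<in> ct_edges T))"

end

theory Submission
  imports Defs
begin


definition mstep :: "(nat \<Rightarrow> real) \<Rightarrow> real \<times> nat \<Rightarrow> nat \<Rightarrow> real \<times> nat" where
  "mstep f vk b = (if f b < fst vk then (f b, b) else vk)"

lemma fold_min:
  assumes "v = f k"
  shows "fst (foldl (mstep f) (v, k) xs) = f (snd (foldl (mstep f) (v, k) xs))
       \<and> snd (foldl (mstep f) (v, k) xs) \<in> insert k (set xs)
       \<and> (\<forall>b \<in> insert k (set xs). fst (foldl (mstep f) (v, k) xs) \<le> f b)"
  using assms
proof (induction xs arbitrary: v k)
  case Nil then show ?case by simp
next
  case (Cons x xs)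
  show ?case
  proof (cases "f x < v")
    case True
    have "foldl (mstep f) (v, k) (x # xs) = foldl (mstep f) (f x, x) xs"
      using True by (simp add: mstep_def)
    with Cons.IH[of "f x" x] True Cons.prems show ?thesis by auto
  next
    case False
    have "foldl (mstep f) (v, k) (x # xs) = foldl (mstep f) (v, k) xs"
      using False by (simp add: mstep_def)
    with Cons.IH[of v k] False Cons.prems show ?thesis by force
  qed
qed

fun cie :: "nat \<Rightarrow> nat set list \<Rightarrow> nat \<Rightarrow> bool" where
  "cie a [] b = (a = b)"
| "cie a (X # Xs) b = (\<exists>c>a. X = {a..<c} \<and> cie c Xs b)"

lemma cie_le: "cie a L b \<Longrightarrow> a + length L \<le> b"
  by (induction L arbitrary: a) force+

lemma cie_consec: "cie a L b \<Longrightarrow> consec_intervals a L"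
  by (induction L arbitrary: a) auto

lemma cie_union: "cie a L b \<Longrightarrow> \<Union> (set L) = {a..<b}"
proof (induction L arbitrary: a)
  case Nil then show ?case by simp
next
  case (Cons X Xs)
  then obtain c where c: "c > a" "X = {a..<c}" "cie c Xs b" by auto
  with Cons.IH[of c] cie_le[OF c(3)] show ?case by auto
qed

lemma cie_snoc: "cie a (L @ [X]) b \<longleftrightarrow> (\<exists>c. cie a L c \<and> c < b \<and> X = {c..<b})"
  by (induction L arbitrary: a) auto

lemma cie_disj: "cie a L b \<Longrightarrow> i < j \<Longrightarrow> j < length L \<Longrightarrow> L ! i \<inter> L ! j = {}"
proof (induction L arbitrary: a i j)
  case Nil then show ?case by simp
next
  case (Cons X Xs)
  then obtain c where c: "c > a" "X = {a..<c}" "cie c Xs b" by auto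
  show ?case
  proof (cases i)
    case 0
    then obtain j' where j: "j = Suc j'" "j' < length Xs" using Cons.prems by (cases j) auto
    have "Xs ! j' \<in> set Xs" using j by simp
    then have "Xs ! j' \<subseteq> {c..<b}" using cie_union[OF c(3)] by auto
    then show ?thesis using 0 j c by auto
  next
    case (Suc i')
    then obtain j' where j: "j = Suc j'" using Cons.prems by (cases j) auto
    then show ?thesis using Cons.IH[OF c(3), of i' j'] Cons.prems Suc by auto
  qed
qed

lemma consec_cie: "consec_intervals a L \<Longrightarrow> \<exists>b. cie a L b"
proof (induction L arbitrary: a)
  case (Cons X L)
  then obtain b where "b > a" "X = {a..<b}" "consec_intervals b L" by auto
  with Cons.IH[of b] show ?case by auto
next
  case Nil show ?case by (rule exI[of _ a]) simp
qed

locale L =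
  fixes m :: "nat \<Rightarrow> real" and \<alpha> \<beta> \<gamma> :: real
begin

definition S :: "nat \<Rightarrow> real" where "S a = sum m {0..<a}"

function D :: "nat \<Rightarrow> nat \<Rightarrow> nat \<Rightarrow> real \<times> nat" where
  "D k i a =
    (if k = 0 then
       (if a \<le> i then (0, a) else
        foldl (\<lambda>vk b. if max (fst (D 0 i b)) (fst (D 1 b a)) + \<alpha> + \<beta> * (S a - S b) < fst vk
                        then (max (fst (D 0 i b)) (fst (D 1 b a)) + \<alpha> + \<beta> * (S a - S b), b) else vk)
          (fst (D 2 i (a - 1)) + \<gamma> * m (a - 1), a) [Suc i..<a])
     else if k = 1 then (if a \<le> Suc i then (0, 0) else (fst (D 0 i a), 0))
     else
       (if a \<le> i then (0, i) else
        foldl (\<lambda>vk b. if max (fst (D 2 i b)) (fst (D 1 b a)) + \<alpha> + \<beta> * (S a - S b) < fst vk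
                        then (max (fst (D 2 i b)) (fst (D 1 b a)) + \<alpha> + \<beta> * (S a - S b), b) else vk)
          (max (fst (D 2 i i)) (fst (D 1 i a)) + \<alpha> + \<beta> * (S a - S i), i) [Suc i..<a]))"
  by pat_completeness auto
termination
  by (relation "measure (\<lambda>(k,i,a). 3 * (a - i) + (if k = 0 then 0 else if k = 1 then 1 else 2))") auto


definition cR :: "nat \<Rightarrow> nat \<Rightarrow> nat \<Rightarrow> real" where
  "cR i a b = (if b = a then fst (D 2 i (a - 1)) + \<gamma> * m (a - 1)
               else max (fst (D 0 i b)) (fst (D 1 b a)) + \<alpha> + \<beta> * (S a - S b))"
definition cP :: "nat \<Rightarrow> nat \<Rightarrow> nat \<Rightarrow> real" where
  "cP i a b = max (fst (D 2 i b)) (fst (D 1 b a)) + \<alpha> + \<beta> * (S a - S b)"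

declare D.simps[simp del]

lemma D0_eq: "i < a \<Longrightarrow> D 0 i a = foldl (mstep (cR i a)) (cR i a a, a) [Suc i..<a]"
  apply (subst D.simps)
  apply (simp add: cR_def)
  apply (rule foldl_cong)
    apply (auto simp: mstep_def cR_def)
  done

lemma D2_eq: "i < a \<Longrightarrow> D 2 i a = foldl (mstep (cP i a)) (cP i a i, i) [Suc i..<a]"
  apply (subst D.simps)
  apply (simp add: cP_def)
  apply (rule foldl_cong)
    apply (auto simp: mstep_def cP_def)
  done

lemma D1_eq: "D 1 i a = (if a \<le> Suc i then (0, 0) else (fst (D 0 i a), 0))"
  by (subst D.simps) simp

lemma D1_eq': "D (Suc 0) i a = (if a \<le> Suc i then (0, 0) else (fst (D 0 i a), 0))"
  using D1_eq by simp

lemma D2_triv: "a \<le> i \<Longrightarrow> D 2 i a = (0, i)"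
  by (subst D.simps) simp

lemma R_props:
  assumes "i < a"
  shows "(snd (D 0 i a) = a \<or> (i < snd (D 0 i a) \<and> snd (D 0 i a) < a))
    \<and> fst (D 0 i a) = cR i a (snd (D 0 i a))
    \<and> (\<forall>b. (b = a \<or> (i < b \<and> b < a)) \<longrightarrow> fst (D 0 i a) \<le> cR i a b)"
  using fold_min[of "cR i a a" "cR i a" a "[Suc i..<a]"] assms
  unfolding D0_eq[OF assms] by auto

lemma P_props:
  assumes "i < a"
  shows "(i \<le> snd (D 2 i a) \<and> snd (D 2 i a) < a)
    \<and> fst (D 2 i a) = cP i a (snd (D 2 i a))
    \<and> (\<forall>b. i \<le> b \<and> b < a \<longrightarrow> fst (D 2 i a) \<le> cP i a b)"
  using fold_min[of "cP i a i" "cP i a" i "[Suc i..<a]"] assms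
  unfolding D2_eq[OF assms] apply auto
  apply (case_tac "b = i"; force)+
  done

lemma Size_S: "c \<le> e \<Longrightarrow> Size m {c..<e} = S e - S c"
  unfolding Size_def S_def
  using sum.atLeastLessThan_concat[of 0 c e m] by simp

fun rootR :: "nat \<Rightarrow> nat \<Rightarrow> nat" where
  "rootR i a = (if a \<le> i then i else
     if i < snd (D 0 i a) \<and> snd (D 0 i a) < a then rootR i (snd (D 0 i a)) else a - 1)"

declare rootR.simps[simp del]

function tree :: "nat \<Rightarrow> nat \<Rightarrow> ctree"
  and chR :: "nat \<Rightarrow> nat \<Rightarrow> ctree option list"
  and chP :: "nat \<Rightarrow> nat \<Rightarrow> ctree option list" where
  "tree i a = (if a \<le> Suc i then Node i [] else Node (rootR i a) (chR i a))"
| "chR i a = (if a \<le> i then [] else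
     if i < snd (D 0 i a) \<and> snd (D 0 i a) < a
     then chR i (snd (D 0 i a)) @ [Some (tree (snd (D 0 i a)) a)]
     else chP i (a - 1) @ [None])"
| "chP i a = (if a \<le> i then [] else
     if i \<le> snd (D 2 i a) \<and> snd (D 2 i a) < a
     then chP i (snd (D 2 i a)) @ [Some (tree (snd (D 2 i a)) a)]
     else [])"
  by pat_completeness auto
termination
  by (relation "measure (\<lambda>x. case x of Inl (i,a) \<Rightarrow> 3 * (a - i) + 1
      | Inr (Inl (i,a)) \<Rightarrow> 3 * (a - i) | Inr (Inr (i,a)) \<Rightarrow> 3 * (a - i) + 2)") auto

declare tree.simps[simp del] chR.simps[simp del] chP.simps[simp del]

definition cstep :: "nat \<Rightarrow> real \<Rightarrow> ctree option \<Rightarrow> real" where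
  "cstep r c x = (case x of None \<Rightarrow> c + \<gamma> * m r
     | Some t \<Rightarrow> max c (ct_cost m \<alpha> \<beta> \<gamma> t) + \<alpha> + \<beta> * Size m (ct_verts t))"

lemma cstep_None[simp]: "cstep r c None = c + \<gamma> * m r"
  by (simp add: cstep_def)
lemma cstep_Some[simp]: "cstep r c (Some t) = max c (ct_cost m \<alpha> \<beta> \<gamma> t) + \<alpha> + \<beta> * Size m (ct_verts t)"
  by (simp add: cstep_def)

lemma ct_cost_Node: "ct_cost m \<alpha> \<beta> \<gamma> (Node r es) = foldl (cstep r) 0 es"
  unfolding cstep_def by simp

lemma verts_Node: "None \<in> set es \<Longrightarrow> ct_verts (Node r es) = \<Union> (set (map (entry_set r) es))"
  by (auto simp: entry_set_def split: option.splits)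

lemma tree_props:
  "(i < a \<longrightarrow> ct_verts (tree i a) = {i..<a} \<and> ct_wf (tree i a) \<and> strongly_ordered (tree i a)
      \<and> ct_cost m \<alpha> \<beta> \<gamma> (tree i a) \<le> fst (D 1 i a) \<and> ct_root (tree i a) \<in> {i..<a})"
  "(i < a \<longrightarrow> cie i (map (entry_set (rootR i a)) (chR i a)) a
      \<and> length (filter (\<lambda>x. x = None) (chR i a)) = 1
      \<and> (\<forall>t. Some t \<in> set (chR i a) \<longrightarrow> ct_wf t \<and> strongly_ordered t)
      \<and> foldl (cstep (rootR i a)) 0 (chR i a) \<le> fst (D 0 i a)
      \<and> (Suc i < a \<longrightarrow> (\<exists>t. Some t \<in> set (chR i a)))
      \<and> rootR i a \<in> {i..<a})"
  "(i \<le> a \<longrightarrow> (\<forall>r. cie i (map (entry_set r) (chP i a)) a)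
      \<and> None \<notin> set (chP i a)
      \<and> (\<forall>t. Some t \<in> set (chP i a) \<longrightarrow> ct_wf t \<and> strongly_ordered t)
      \<and> (\<forall>r. foldl (cstep r) 0 (chP i a) \<le> fst (D 2 i a))
      \<and> (i < a \<longrightarrow> chP i a \<noteq> []))"
proof (induction i a and i a and i a rule: tree_chR_chP.induct)
  case (1 i a)
  show ?case
  proof
    assume ia: "i < a"
    show "ct_verts (tree i a) = {i..<a} \<and> ct_wf (tree i a) \<and> strongly_ordered (tree i a)
      \<and> ct_cost m \<alpha> \<beta> \<gamma> (tree i a) \<le> fst (D 1 i a) \<and> ct_root (tree i a) \<in> {i..<a}"
    proof (cases "a \<le> Suc i")
      case True
      then have a: "a = Suc i" using ia by simp
      have t: "tree i a = Node i []" using True by (subst tree.simps) simp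
      show ?thesis unfolding t using a by (simp add: D1_eq D1_eq' ct_cost_Node)
    next
      case False
      define r where "r = rootR i a"
      define es where "es = chR i a"
      have t: "tree i a = Node r es" using False unfolding r_def es_def by (subst tree.simps) simp
      have IH: "cie i (map (entry_set r) es) a"
        "length (filter (\<lambda>x. x = None) es) = 1"
        "\<forall>t. Some t \<in> set es \<longrightarrow> ct_wf t \<and> strongly_ordered t"
        "foldl (cstep r) 0 es \<le> fst (D 0 i a)"
        "\<exists>t. Some t \<in> set es" "r \<in> {i..<a}"
        using 1 False ia unfolding r_def es_def by auto
      have None: "None \<in> set es"
      proof (rule ccontr)
        assume "None \<notin> set es"
        then have "filter (\<lambda>x. x = None) es = []" by (metis (mono_tags) filter_False)
        with IH(2) show False by simp
      qed
      have V: "ct_verts (Node r es) = {i..<a}"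
        using verts_Node[OF None] cie_union[OF IH(1)] by simp
      have Min: "Min {i..<a} = i" using ia by (intro Min_eqI) auto
      have wf: "ct_wf (Node r es)"
      proof -
        have "\<forall>x\<in>set es. case x of None \<Rightarrow> True | Some t \<Rightarrow> ct_wf t"
          using IH(3) by (auto split: option.splits)
        moreover have "\<forall>i' j. i' < j \<and> j < length es \<longrightarrow> entry_set r (es ! i') \<inter> entry_set r (es ! j) = {}"
          using cie_disj[OF IH(1)] by fastforce
        ultimately show ?thesis using IH(2,5) by auto
      qed
      have so: "strongly_ordered (Node r es)"
      proof -
        have "\<forall>x\<in>set es. case x of None \<Rightarrow> True | Some t \<Rightarrow> strongly_ordered t"
          using IH(3) by (auto split: option.splits)
        then show ?thesis
          apply (simp only: strongly_ordered.simps V Min)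
          using cie_consec[OF IH(1)] by simp
      qed
      have c: "ct_cost m \<alpha> \<beta> \<gamma> (Node r es) \<le> fst (D 1 i a)"
        unfolding ct_cost_Node using IH(4) False by (simp add: D1_eq D1_eq')
      show ?thesis unfolding t using V wf so c IH(6) by simp
    qed
  qed
next
  case (2 i a)
  show ?case
  proof
    assume ia: "i < a"
    define b where "b = snd (D 0 i a)"
    have Rp: "b = a \<or> (i < b \<and> b < a)" "fst (D 0 i a) = cR i a b"
      "\<forall>b'. (b' = a \<or> (i < b' \<and> b' < a)) \<longrightarrow> fst (D 0 i a) \<le> cR i a b'"
      using R_props[OF ia] unfolding b_def by auto
    show "cie i (map (entry_set (rootR i a)) (chR i a)) a
      \<and> length (filter (\<lambda>x. x = None) (chR i a)) = 1
      \<and> (\<forall>t. Some t \<in> set (chR i a) \<longrightarrow> ct_wf t \<and> strongly_ordered t)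
      \<and> foldl (cstep (rootR i a)) 0 (chR i a) \<le> fst (D 0 i a)
      \<and> (Suc i < a \<longrightarrow> (\<exists>t. Some t \<in> set (chR i a)))
      \<and> rootR i a \<in> {i..<a}"
    proof (cases "i < b \<and> b < a")
      case True
      have ch: "chR i a = chR i b @ [Some (tree b a)]"
        using True ia unfolding b_def by (subst chR.simps) simp
      have rt: "rootR i a = rootR i b"
        using True ia unfolding b_def by (subst rootR.simps) simp
      have IH2: "cie i (map (entry_set (rootR i b)) (chR i b)) b"
        "length (filter (\<lambda>x. x = None) (chR i b)) = 1"
        "\<forall>t. Some t \<in> set (chR i b) \<longrightarrow> ct_wf t \<and> strongly_ordered t"
        "foldl (cstep (rootR i b)) 0 (chR i b) \<le> fst (D 0 i b)"
        "rootR i b \<in> {i..<b}"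
        using 2 ia True unfolding b_def by auto
      have IH1: "ct_verts (tree b a) = {b..<a}" "ct_wf (tree b a)" "strongly_ordered (tree b a)"
        "ct_cost m \<alpha> \<beta> \<gamma> (tree b a) \<le> fst (D 1 b a)"
        using 2 ia True unfolding b_def by auto
      have cost: "foldl (cstep (rootR i a)) 0 (chR i a) \<le> fst (D 0 i a)"
      proof -
        have "foldl (cstep (rootR i a)) 0 (chR i a)
            = max (foldl (cstep (rootR i b)) 0 (chR i b)) (ct_cost m \<alpha> \<beta> \<gamma> (tree b a)) + \<alpha> + \<beta> * (S a - S b)"
          unfolding ch rt using IH1(1) True by (simp add: Size_S)
        also have "\<dots> \<le> max (fst (D 0 i b)) (fst (D 1 b a)) + \<alpha> + \<beta> * (S a - S b)"
          using max.mono[OF IH2(4) IH1(4)] by simp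
        also have "\<dots> = cR i a b" using True by (simp add: cR_def)
        finally show ?thesis using Rp(2) by simp
      qed
      show ?thesis
        unfolding ch rt using IH2 IH1 cost[unfolded ch rt] True
        by (auto simp: cie_snoc entry_set_def)
    next
      case False
      then have ba: "b = a" using Rp(1) by auto
      have ch: "chR i a = chP i (a - 1) @ [None]"
        using False ia unfolding b_def by (subst chR.simps) auto
      have rt: "rootR i a = a - 1"
        using False ia unfolding b_def by (subst rootR.simps) auto
      have IH3: "cie i (map (entry_set (a - 1)) (chP i (a - 1))) (a - 1)"
        "None \<notin> set (chP i (a - 1))"
        "\<forall>t. Some t \<in> set (chP i (a - 1)) \<longrightarrow> ct_wf t \<and> strongly_ordered t"
        "foldl (cstep (a - 1)) 0 (chP i (a - 1)) \<le> fst (D 2 i (a - 1))"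
        "i < a - 1 \<longrightarrow> chP i (a - 1) \<noteq> []"
        using 2 ia False unfolding b_def by auto
      have cost: "foldl (cstep (rootR i a)) 0 (chR i a) \<le> fst (D 0 i a)"
      proof -
        have "foldl (cstep (rootR i a)) 0 (chR i a) = foldl (cstep (a - 1)) 0 (chP i (a - 1)) + \<gamma> * m (a - 1)"
          unfolding ch rt by simp
        also have "\<dots> \<le> cR i a a" using IH3(4) by (simp add: cR_def)
        finally show ?thesis using Rp(2) ba by simp
      qed
      have filt: "filter (\<lambda>x. x = None) (chP i (a - 1)) = []"
        using IH3(2) by (metis (mono_tags) filter_False)
      have ex: "Suc i < a \<longrightarrow> (\<exists>t. Some t \<in> set (chP i (a - 1)))"
      proof
        assume "Suc i < a"
        then have "chP i (a - 1) \<noteq> []" using IH3(5) by simp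
        then obtain x where x: "x \<in> set (chP i (a - 1))" by (meson last_in_set)
        have "x \<noteq> None" using IH3(2) x by metis
        then obtain t where "x = Some t" by blast
        then show "\<exists>t. Some t \<in> set (chP i (a - 1))" using x by blast
      qed
      have ciefull: "cie i (map (entry_set (a - 1)) (chR i a)) a"
        using IH3(1) ia unfolding ch by (simp only: map_append list.map cie_snoc) (intro exI[of _ "a - 1"], auto simp: entry_set_def)
      show ?thesis
        unfolding rt using ciefull cost[unfolded rt] ia IH3(2,3) ex filt unfolding ch
        by auto
    qed
  qed
next
  case (3 i a)
  show ?case
  proof
    assume ia: "i \<le> a"
    show "(\<forall>r. cie i (map (entry_set r) (chP i a)) a)
      \<and> None \<notin> set (chP i a)
      \<and> (\<forall>t. Some t \<in> set (chP i a) \<longrightarrow> ct_wf t \<and> strongly_ordered t)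
      \<and> (\<forall>r. foldl (cstep r) 0 (chP i a) \<le> fst (D 2 i a))
      \<and> (i < a \<longrightarrow> chP i a \<noteq> [])"
    proof (cases "a \<le> i")
      case True
      then have "a = i" using ia by simp
      moreover have "chP i a = []" using True by (subst chP.simps) simp
      ultimately show ?thesis by (simp add: D2_triv)
    next
      case False
      then have ia': "i < a" by simp
      define b where "b = snd (D 2 i a)"
      have Pp: "i \<le> b \<and> b < a" "fst (D 2 i a) = cP i a b"
        using P_props[OF ia'] unfolding b_def by auto
      have ch: "chP i a = chP i b @ [Some (tree b a)]"
        using Pp(1) False unfolding b_def by (subst chP.simps) simp
      have IH3: "\<forall>r. cie i (map (entry_set r) (chP i b)) b"
        "None \<notin> set (chP i b)"
        "\<forall>t. Some t \<in> set (chP i b) \<longrightarrow> ct_wf t \<and> strongly_ordered t"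
        "\<forall>r. foldl (cstep r) 0 (chP i b) \<le> fst (D 2 i b)"
        using 3 False Pp(1) unfolding b_def by auto
      have IH1: "ct_verts (tree b a) = {b..<a}" "ct_wf (tree b a)" "strongly_ordered (tree b a)"
        "ct_cost m \<alpha> \<beta> \<gamma> (tree b a) \<le> fst (D 1 b a)"
        using 3 False Pp(1) unfolding b_def by auto
      have cost: "foldl (cstep r) 0 (chP i a) \<le> fst (D 2 i a)" for r
      proof -
        have "foldl (cstep r) 0 (chP i a)
            = max (foldl (cstep r) 0 (chP i b)) (ct_cost m \<alpha> \<beta> \<gamma> (tree b a)) + \<alpha> + \<beta> * (S a - S b)"
          unfolding ch using IH1(1) Pp(1) by (simp add: Size_S)
        also have "\<dots> \<le> max (fst (D 2 i b)) (fst (D 1 b a)) + \<alpha> + \<beta> * (S a - S b)"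
          using max.mono[OF spec[OF IH3(4), of r] IH1(4)] by simp
        also have "\<dots> = cP i a b" by (simp add: cP_def)
        finally show ?thesis using Pp(2) by simp
      qed
      show ?thesis
        unfolding ch using IH3 IH1 cost[unfolded ch] Pp(1)
        by (auto simp: cie_snoc entry_set_def)
    qed
  qed
qed

lemma lb_list:
  "cie i (map (entry_set r) xs) e \<Longrightarrow> length (filter (\<lambda>x. x = None) xs) \<le> 1 \<Longrightarrow>
   (\<forall>t. Some t \<in> set xs \<longrightarrow> (\<forall>b c. ct_verts t = {b..<c} \<and> b < c \<longrightarrow> fst (D 1 b c) \<le> ct_cost m \<alpha> \<beta> \<gamma> t)) \<Longrightarrow>
   (None \<notin> set xs \<longrightarrow> fst (D 2 i e) \<le> foldl (cstep r) 0 xs)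
   \<and> (None \<in> set xs \<longrightarrow> i < e \<and> fst (D 0 i e) \<le> foldl (cstep r) 0 xs)"
proof (induction xs arbitrary: e rule: rev_induct)
  case Nil
  then show ?case by (simp add: D2_triv)
next
  case (snoc x xs)
  from snoc.prems(1) obtain c where c: "cie i (map (entry_set r) xs) c" "c < e" "entry_set r x = {c..<e}"
    by (auto simp: cie_snoc)
  have ic: "i \<le> c" using cie_le[OF c(1)] by simp
  have cnt: "length (filter (\<lambda>x. x = None) xs) \<le> 1" using snoc.prems(2) by simp
  have IH: "(None \<notin> set xs \<longrightarrow> fst (D 2 i c) \<le> foldl (cstep r) 0 xs)
      \<and> (None \<in> set xs \<longrightarrow> i < c \<and> fst (D 0 i c) \<le> foldl (cstep r) 0 xs)"
    using snoc.IH[OF c(1) cnt] snoc.prems(3) by auto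
  show ?case
  proof (cases x)
    case None
    have "c \<in> entry_set r x" using c(2,3) by simp
    then have rc1: "c = r" using None by (simp add: entry_set_def)
    have "\<not> Suc c < e"
    proof
      assume "Suc c < e"
      then have "Suc c \<in> entry_set r x" using c(3) by simp
      then show False using None rc1 by (simp add: entry_set_def)
    qed
    then have rc: "r = c" "e = Suc c" using rc1 c(2) by auto
    have nn: "None \<notin> set xs"
    proof
      assume "None \<in> set xs"
      then have "filter (\<lambda>x. x = None) xs \<noteq> []" by (simp add: filter_empty_conv)
      then show False using snoc.prems(2) None by simp
    qed
    have "fst (D 0 i e) \<le> cR i e e" using R_props[of i e] rc ic by auto
    also have "\<dots> = fst (D 2 i c) + \<gamma> * m c" using rc by (simp add: cR_def)
    also have "\<dots> \<le> foldl (cstep r) 0 xs + \<gamma> * m r" using IH nn rc by simp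
    finally show ?thesis using None nn rc ic by simp
  next
    case (Some t)
    have vt: "ct_verts t = {c..<e}" using c(3) Some by (simp add: entry_set_def)
    have ct: "fst (D 1 c e) \<le> ct_cost m \<alpha> \<beta> \<gamma> t" using snoc.prems(3) Some vt c(2) by auto
    have f: "foldl (cstep r) 0 (xs @ [x]) = max (foldl (cstep r) 0 xs) (ct_cost m \<alpha> \<beta> \<gamma> t) + \<alpha> + \<beta> * (S e - S c)"
      using Some vt c(2) by (simp add: Size_S)
    show ?thesis
    proof (cases "None \<in> set xs")
      case False
      have "fst (D 2 i e) \<le> cP i e c" using P_props[of i e] ic c(2) by auto
      also have "\<dots> \<le> max (foldl (cstep r) 0 xs) (ct_cost m \<alpha> \<beta> \<gamma> t) + \<alpha> + \<beta> * (S e - S c)"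
        unfolding cP_def using max.mono[OF mp[OF conjunct1[OF IH] False] ct] by simp
      finally show ?thesis using f False Some vt c(2) by (simp add: Size_S)
    next
      case True
      then have ic': "i < c" and R: "fst (D 0 i c) \<le> foldl (cstep r) 0 xs" using IH by auto
      have "fst (D 0 i e) \<le> cR i e c" using R_props[of i e] ic' c(2) by auto
      also have "\<dots> \<le> max (foldl (cstep r) 0 xs) (ct_cost m \<alpha> \<beta> \<gamma> t) + \<alpha> + \<beta> * (S e - S c)"
        unfolding cR_def using max.mono[OF R ct] c(2) by simp
      finally show ?thesis using f True Some ic' vt c(2) by (simp add: Size_S)
    qed
  qed
qed

lemma lower:
  "ct_wf T \<Longrightarrow> strongly_ordered T \<Longrightarrow> ct_verts T = {i..<a} \<Longrightarrow> i < a \<Longrightarrow>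
   fst (D 1 i a) \<le> ct_cost m \<alpha> \<beta> \<gamma> T"
proof (induction T arbitrary: i a)
  case (Node r es)
  show ?case
  proof (cases "es = []")
    case True
    then have h: "{r} = {i..<a}" using Node.prems(3) by simp
    have "i \<in> {r}" unfolding h using Node.prems(4) by simp
    then have ir: "i = r" by simp
    have "\<not> Suc i < a"
    proof
      assume "Suc i < a"
      then have "Suc i \<in> {r}" unfolding h by simp
      then have "Suc i = r" by simp
      with ir show False by simp
    qed
    then have "a = Suc i" using Node.prems(4) by simp
    then show ?thesis using True by (simp add: D1_eq')
  next
    case False
    have wf: "length (filter (\<lambda>x. x = None) es) = 1" "\<exists>x\<in>set es. x \<noteq> None"
      "\<forall>x\<in>set es. case x of None \<Rightarrow> True | Some t \<Rightarrow> ct_wf t"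
      using Node.prems(1) False by auto
    have None: "None \<in> set es"
    proof (rule ccontr)
      assume "None \<notin> set es"
      then have "filter (\<lambda>x. x = None) es = []" by (metis (mono_tags) filter_False)
      with wf(1) show False by simp
    qed
    obtain t0 where t0: "Some t0 \<in> set es" using wf(2) by auto
    have V: "\<Union> (set (map (entry_set r) es)) = {i..<a}"
      using verts_Node[OF None, of r] Node.prems(3) by simp
    have Min: "Min {i..<a} = i" using Node.prems(4) by (intro Min_eqI) auto
    have so: "consec_intervals i (map (entry_set r) es)"
      "\<forall>x\<in>set es. case x of None \<Rightarrow> True | Some t \<Rightarrow> strongly_ordered t"
      using Node.prems(2) unfolding strongly_ordered.simps Node.prems(3) Min by auto
    obtain b where b: "cie i (map (entry_set r) es) b" using consec_cie[OF so(1)] by blast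
    have "{i..<b} = {i..<a}" using cie_union[OF b] V by simp
    moreover have "i < b" using cie_le[OF b] False by (cases es) auto
    ultimately have ba: "b = a" by (metis atLeastLessThan_inj(2) Node.prems(4))
    have len: "2 \<le> length es"
    proof -
      have "{None, Some t0} \<subseteq> set es" using None t0 by auto
      then have "card {None, Some t0} \<le> card (set es)" by (intro card_mono) auto
      also have "\<dots> \<le> length es" by (rule card_length)
      finally show ?thesis by simp
    qed
    have a2: "Suc i < a" using cie_le[OF b] len ba by simp
    have sub: "\<forall>t. Some t \<in> set es \<longrightarrow> (\<forall>b c. ct_verts t = {b..<c} \<and> b < c \<longrightarrow> fst (D 1 b c) \<le> ct_cost m \<alpha> \<beta> \<gamma> t)"
    proof (intro allI impI)
      fix t b c assume t: "Some t \<in> set es" and bc: "ct_verts t = {b..<c} \<and> b < c"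
      have "ct_wf t" "strongly_ordered t" using wf(3) so(2) t by force+
      then show "fst (D 1 b c) \<le> ct_cost m \<alpha> \<beta> \<gamma> t" using Node.IH[OF t _] bc by auto
    qed
    have "fst (D 0 i a) \<le> foldl (cstep r) 0 es"
      using lb_list[OF b[unfolded ba]] wf(1) sub None by auto
    then show ?thesis using a2 unfolding ct_cost_Node by (simp add: D1_eq D1_eq')
  qed
qed

end


definition tot :: "com \<Rightarrow> state \<Rightarrow> (state \<Rightarrow> bool) \<Rightarrow> nat \<Rightarrow> bool" where
  "tot c s Q n \<longleftrightarrow> (\<exists>t s'. exec c s t s' \<and> t \<le> n \<and> Q s')"

lemma tot_mono: "tot c s Q n \<Longrightarrow> (\<And>s. Q s \<Longrightarrow> Q' s) \<Longrightarrow> n \<le> n' \<Longrightarrow> tot c s Q' n'"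
  unfolding tot_def by force

lemma tot_Seq: "tot c1 s (\<lambda>s1. tot c2 s1 Q n2) n1 \<Longrightarrow> tot (Seq c1 c2) s Q (n1 + n2)"
  unfolding tot_def by (force intro: exec.Seq)

lemma tot_If: "(bval b s \<Longrightarrow> tot c1 s Q n) \<Longrightarrow> (\<not> bval b s \<Longrightarrow> tot c2 s Q n) \<Longrightarrow>
   tot (If b c1 c2) s Q (1 + bcost b + n)"
  unfolding tot_def by (cases "bval b s") (force intro: exec.IfT exec.IfF)+

lemma tot_While:
  assumes step: "\<And>k s. I k s \<Longrightarrow> bval b s \<Longrightarrow> 0 < k \<and> tot c s (I (k - 1)) n"
  shows "I k s \<Longrightarrow> tot (While b c) s (\<lambda>s'. \<exists>j. I j s' \<and> \<not> bval b s') (k * (n + 1 + bcost b) + 1 + bcost b)"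
proof (induction k arbitrary: s)
  case 0
  then have "\<not> bval b s" using step by blast
  then show ?case using 0 unfolding tot_def by (force intro: exec.WhileF)
next
  case (Suc k)
  show ?case
  proof (cases "bval b s")
    case False
    then show ?thesis using Suc.prems unfolding tot_def by (force intro: exec.WhileF)
  next
    case True
    then have "tot c s (I k) n" using step[OF Suc.prems] by simp
    then obtain t1 s1 where 1: "exec c s t1 s1" "t1 \<le> n" "I k s1" unfolding tot_def by blast
    from Suc.IH[OF 1(3)] obtain t2 s2 where 2: "exec (While b c) s1 t2 s2"
      "t2 \<le> k * (n + 1 + bcost b) + 1 + bcost b" "\<exists>j. I j s2 \<and> \<not> bval b s2" unfolding tot_def by blast
    have "exec (While b c) s (1 + bcost b + t1 + t2) s2" by (rule exec.WhileT[OF True 1(1) 2(1)])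
    moreover have "1 + bcost b + t1 + t2 \<le> Suc k * (n + 1 + bcost b) + 1 + bcost b" using 1(2) 2(2) by simp
    ultimately show ?thesis using 2(3) unfolding tot_def by blast
  qed
qed

fun loopfree :: "com \<Rightarrow> bool" where
  "loopfree (While b c) = False"
| "loopfree (Seq c1 c2) = (loopfree c1 \<and> loopfree c2)"
| "loopfree (If b c1 c2) = (loopfree c1 \<and> loopfree c2)"
| "loopfree _ = True"

fun sl :: "com \<Rightarrow> state \<Rightarrow> state" where
  "sl SKIP s = s"
| "sl (IStore a b e) s = s\<lparr>imem := (imem s)((ival a s, ival b s) := ival e s),
        iused := insert (ival a s, ival b s) (iused s)\<rparr>"
| "sl (RStore a b e) s = s\<lparr>rmem := (rmem s)((ival a s, ival b s) := rval e s),
        rused := insert (ival a s, ival b s) (rused s)\<rparr>"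
| "sl (Seq c1 c2) s = sl c2 (sl c1 s)"
| "sl (If b c1 c2) s = (if bval b s then sl c1 s else sl c2 s)"
| "sl (While b c) s = s"

fun slc :: "com \<Rightarrow> nat" where
  "slc SKIP = 1"
| "slc (IStore a b e) = 1 + icost a + icost b + icost e"
| "slc (RStore a b e) = 1 + icost a + icost b + rcost e"
| "slc (Seq c1 c2) = slc c1 + slc c2"
| "slc (If b c1 c2) = 1 + bcost b + max (slc c1) (slc c2)"
| "slc (While b c) = 0"

lemma sl_exec: "loopfree c \<Longrightarrow> \<exists>t. exec c s t (sl c s) \<and> t \<le> slc c"
proof (induction c arbitrary: s)
  case SKIP then show ?case by (auto intro: exec.Skip)
next
  case (IStore a b e) then show ?case by (auto intro: exec.IStore)
next
  case (RStore a b e) then show ?case by (auto intro: exec.RStore)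
next
  case (Seq c1 c2)
  then obtain t1 where 1: "exec c1 s t1 (sl c1 s)" "t1 \<le> slc c1" by auto
  from Seq obtain t2 where 2: "exec c2 (sl c1 s) t2 (sl c2 (sl c1 s))" "t2 \<le> slc c2" by fastforce
  show ?case using exec.Seq[OF 1(1) 2(1)] 1(2) 2(2) by force
next
  case (If b c1 c2)
  show ?case
  proof (cases "bval b s")
    case True
    with If obtain t where "exec c1 s t (sl c1 s)" "t \<le> slc c1" by auto
    then show ?thesis using True by (force intro: exec.IfT)
  next
    case False
    with If obtain t where "exec c2 s t (sl c2 s)" "t \<le> slc c2" by auto
    then show ?thesis using False by (force intro: exec.IfF)
  qed
qed simp

lemma tot_sl: "loopfree c \<Longrightarrow> Q (sl c s) \<Longrightarrow> slc c \<le> n \<Longrightarrow> tot c s Q n"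
  unfolding tot_def using sl_exec[of c s] by force


abbreviation pp :: iexp where "pp \<equiv> IL (IC 0) (IC 0)"
abbreviation ireg :: "int \<Rightarrow> iexp" where "ireg k \<equiv> IL (IC 2) (IC k)"
abbreviation iset :: "int \<Rightarrow> iexp \<Rightarrow> com" where "iset k e \<equiv> IStore (IC 2) (IC k) e"
abbreviation rreg :: "int \<Rightarrow> rexp" where "rreg k \<equiv> RL (IC 3) (IC k)"
abbreviation rset :: "int \<Rightarrow> rexp \<Rightarrow> com" where "rset k e \<equiv> RStore (IC 3) (IC k) e"
abbreviation inc :: "iexp \<Rightarrow> iexp" where "inc e \<equiv> IAdd e (IC 1)"
abbreviation dec :: "iexp \<Rightarrow> iexp" where "dec e \<equiv> ISub e (IC 1)"
abbreviation pos :: "iexp \<Rightarrow> iexp" where "pos e \<equiv> IAdd (IC 10) e"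
abbreviation ngt :: "iexp \<Rightarrow> iexp" where "ngt e \<equiv> ISub (IC (-10)) e"

definition PREbody :: com where
  "PREbody = Seq (RStore (IC 2) (inc (ireg 11)) (RAdd (RL (IC 2) (ireg 11)) (RL (IC 0) (ireg 11))))
                 (iset 11 (inc (ireg 11)))"
definition PRE :: com where
  "PRE = Seq (RStore (IC 2) (IC 0) (RC 0)) (Seq (iset 11 (IC 0)) (While (ILe (inc (ireg 11)) pp) PREbody))"

locale M = L +
  fixes p :: nat
begin

definition inp :: "state \<Rightarrow> bool" where
  "inp s \<longleftrightarrow> imem s (0,0) = int p \<and> (\<forall>j<p. rmem s (0, int j) = m j)
     \<and> rmem s (1,0) = \<alpha> \<and> rmem s (1,1) = \<beta> \<and> rmem s (1,2) = \<gamma>"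

definition IU :: "(int \<times> int) set" where
  "IU = {(0,0)} \<union> ({1} \<times> {0..<int p}) \<union> ({2} \<times> {0..12})
     \<union> ({10..10 + int p} \<times> {10..10 + int p}) \<union> ({10..10 + int p} \<times> {-10 - int p..-10})
     \<union> ({-10 - int p..-10} \<times> {10..10 + int p})"
definition RU :: "(int \<times> int) set" where
  "RU = ({0} \<times> {0..<int p}) \<union> ({1} \<times> {0..2}) \<union> ({2} \<times> {0..int p}) \<union> ({3} \<times> {0..3})
     \<union> ({10..10 + int p} \<times> {10..10 + int p}) \<union> ({10..10 + int p} \<times> {-10 - int p..-10})
     \<union> ({-10 - int p..-10} \<times> {10..10 + int p})"

definition used :: "state \<Rightarrow> bool" where
  "used s \<longleftrightarrow> iused s \<subseteq> IU \<and> rused s \<subseteq> RU"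

definition Sok :: "state \<Rightarrow> nat \<Rightarrow> bool" where
  "Sok s k \<longleftrightarrow> (\<forall>j\<le>k. rmem s (2, int j) = S j)"

lemma S_Suc: "S (Suc j) = S j + m j" by (simp add: S_def)
lemma S_0: "S 0 = 0" by (simp add: S_def)

definition PI :: "nat \<Rightarrow> state \<Rightarrow> bool" where
  "PI k s \<longleftrightarrow> inp s \<and> used s \<and> (\<exists>j. imem s (2,11) = int j \<and> j \<le> p \<and> k = p - j \<and> Sok s j)"

lemma PRE_loop: "PI k s \<Longrightarrow> tot (While (ILe (inc (ireg 11)) pp) PREbody) s
   (\<lambda>s'. \<exists>j. PI j s' \<and> \<not> bval (ILe (inc (ireg 11)) pp) s') (k * (slc PREbody + 1 + bcost (ILe (inc (ireg 11)) pp)) + 1 + bcost (ILe (inc (ireg 11)) pp))"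
proof -
  assume "PI k s"
  have "tot (While (ILe (inc (ireg 11)) pp) PREbody) s
   (\<lambda>s'. \<exists>j. PI j s' \<and> \<not> bval (ILe (inc (ireg 11)) pp) s') (k * (slc PREbody + 1 + bcost (ILe (inc (ireg 11)) pp)) + 1 + bcost (ILe (inc (ireg 11)) pp))"
  proof (rule tot_While[where I = PI])
    fix k s assume I: "PI k s" and g: "bval (ILe (inc (ireg 11)) pp) s"
    from I obtain j where j: "imem s (2,11) = int j" "j \<le> p" "k = p - j" "Sok s j" "inp s" "used s"
      unfolding PI_def by blast
    have jp: "j < p" using g j by (simp add: inp_def)
    show "0 < k \<and> tot PREbody s (PI (k - 1)) (slc PREbody)"
    proof
      show "0 < k" using j jp by simp
      show "tot PREbody s (PI (k - 1)) (slc PREbody)"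
      proof (rule tot_sl)
        show "loopfree PREbody" by (simp add: PREbody_def)
        show "PI (k - 1) (sl PREbody s)"
          unfolding PI_def
        proof (intro conjI exI)
          show "inp (sl PREbody s)" using j(5) by (simp add: PREbody_def inp_def j(1))
          show "used (sl PREbody s)" using j(6) jp by (simp add: PREbody_def used_def IU_def RU_def j(1))
          show "imem (sl PREbody s) (2,11) = int (Suc j)" by (simp add: PREbody_def j(1))
          show "Suc j \<le> p" using jp by simp
          show "k - 1 = p - Suc j" using j by simp
          show "Sok (sl PREbody s) (Suc j)" using j(4,5) jp
            by (auto simp: PREbody_def Sok_def j(1) inp_def S_Suc le_Suc_eq)
        qed
      qed simp
    qed
  qed (rule \<open>PI k s\<close>)
  then show ?thesis .
qed

end


abbreviation alE :: rexp where "alE \<equiv> RL (IC 1) (IC 0)"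
abbreviation beE :: rexp where "beE \<equiv> RL (IC 1) (IC 1)"
abbreviation gaE :: rexp where "gaE \<equiv> RL (IC 1) (IC 2)"
abbreviation candE :: "rexp \<Rightarrow> iexp \<Rightarrow> rexp" where
  "candE x bb \<equiv> RAdd (RAdd x alE) (RMul beE (RSub (RL (IC 2) (ireg 1)) (RL (IC 2) bb)))"

definition maxcand :: "iexp \<Rightarrow> com" where
  "maxcand bb = If (RLe (rreg 1) (rreg 2)) (rset 3 (candE (rreg 2) bb)) (rset 3 (candE (rreg 1) bb))"

definition upd :: com where
  "upd = Seq (If (BNot (RLe (rreg 0) (rreg 3))) (Seq (rset 0 (rreg 3)) (iset 3 (ireg 2))) SKIP)
             (iset 2 (inc (ireg 2)))"

abbreviation gb :: bexp where "gb \<equiv> ILe (inc (ireg 2)) (ireg 1)"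

definition RB :: com where
  "RB = Seq (rset 1 (RL (pos (ireg 0)) (ngt (ireg 2))))
       (Seq (rset 2 (RL (ngt (ireg 2)) (pos (ireg 1)))) (Seq (maxcand (ireg 2)) upd))"

definition PB :: com where
  "PB = Seq (rset 1 (RL (pos (ireg 0)) (pos (ireg 2))))
       (Seq (rset 2 (RL (ngt (ireg 2)) (pos (ireg 1)))) (Seq (maxcand (ireg 2)) upd))"

context M begin

definition Pc :: "nat \<Rightarrow> nat \<Rightarrow> int \<times> int" where "Pc i a = (10 + int i, 10 + int a)"
definition Rc :: "nat \<Rightarrow> nat \<Rightarrow> int \<times> int" where "Rc i a = (10 + int i, -10 - int a)"
definition Fc :: "nat \<Rightarrow> nat \<Rightarrow> int \<times> int" where "Fc i a = (-10 - int i, 10 + int a)"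

definition tabR :: "state \<Rightarrow> nat \<Rightarrow> nat \<Rightarrow> bool" where
  "tabR s i a \<longleftrightarrow> rmem s (Rc i a) = fst (D 0 i a) \<and> imem s (Rc i a) = int (snd (D 0 i a))
     \<and> imem s (Fc i a) = int (rootR i a) \<and> rmem s (Fc i a) = fst (D 1 i a)"
definition tabP :: "state \<Rightarrow> nat \<Rightarrow> nat \<Rightarrow> bool" where
  "tabP s i a \<longleftrightarrow> rmem s (Pc i a) = fst (D 2 i a) \<and> imem s (Pc i a) = int (snd (D 2 i a))"

definition ROWS :: "state \<Rightarrow> nat \<Rightarrow> bool" where
  "ROWS s k \<longleftrightarrow> (\<forall>i' a'. k \<le> i' \<longrightarrow> i' < a' \<longrightarrow> a' \<le> p \<longrightarrow> tabR s i' a' \<and> tabP s i' a')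
     \<and> (\<forall>i'. k \<le> i' \<longrightarrow> i' < p \<longrightarrow> rmem s (Pc i' i') = 0)"

definition DONE :: "state \<Rightarrow> nat \<Rightarrow> nat \<Rightarrow> bool" where
  "DONE s i a \<longleftrightarrow> ROWS s (Suc i) \<and> rmem s (Pc i i) = 0 \<and> (\<forall>a'. i < a' \<longrightarrow> a' < a \<longrightarrow> tabR s i a' \<and> tabP s i a')"

definition base :: "state \<Rightarrow> bool" where
  "base s \<longleftrightarrow> inp s \<and> used s \<and> Sok s p"

definition fr :: "state \<Rightarrow> state \<Rightarrow> bool" where
  "fr s s' \<longleftrightarrow> (\<forall>x y. x \<noteq> 3 \<longrightarrow> rmem s' (x,y) = rmem s (x,y))
     \<and> (\<forall>x y. x \<noteq> 2 \<longrightarrow> imem s' (x,y) = imem s (x,y))"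

definition fr' :: "state \<Rightarrow> state \<Rightarrow> (int \<times> int) set \<Rightarrow> bool" where
  "fr' s s' X \<longleftrightarrow> (\<forall>x y. x \<noteq> 3 \<longrightarrow> (x,y) \<notin> X \<longrightarrow> rmem s' (x,y) = rmem s (x,y))
     \<and> (\<forall>x y. x \<noteq> 2 \<longrightarrow> (x,y) \<notin> X \<longrightarrow> imem s' (x,y) = imem s (x,y))"

lemma cells_inj[simp]:
  "Pc i a = Pc i' a' \<longleftrightarrow> i = i' \<and> a = a'"
  "Rc i a = Rc i' a' \<longleftrightarrow> i = i' \<and> a = a'"
  "Fc i a = Fc i' a' \<longleftrightarrow> i = i' \<and> a = a'"
  "Pc i a \<noteq> Rc i' a'" "Pc i a \<noteq> Fc i' a'" "Rc i a \<noteq> Fc i' a'"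
  "Rc i a \<noteq> Pc i' a'" "Fc i a \<noteq> Pc i' a'" "Fc i a \<noteq> Rc i' a'"
  by (auto simp: Pc_def Rc_def Fc_def)

lemma cells_row[simp]:
  "fst (Pc i a) \<noteq> 2" "fst (Rc i a) \<noteq> 2" "fst (Fc i a) \<noteq> 2"
  "fst (Pc i a) \<noteq> 3" "fst (Rc i a) \<noteq> 3" "fst (Fc i a) \<noteq> 3"
  by (simp_all add: Pc_def Rc_def Fc_def)

lemma fr'_cell_r: "fr' s s' X \<Longrightarrow> c \<notin> X \<Longrightarrow> fst c \<noteq> 3 \<Longrightarrow> rmem s' c = rmem s c"
  unfolding fr'_def by (cases c) auto
lemma fr'_cell_i: "fr' s s' X \<Longrightarrow> c \<notin> X \<Longrightarrow> fst c \<noteq> 2 \<Longrightarrow> imem s' c = imem s c"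
  unfolding fr'_def by (cases c) auto

lemma fr'_tabR: "fr' s s' X \<Longrightarrow> Rc i a \<notin> X \<Longrightarrow> Fc i a \<notin> X \<Longrightarrow> tabR s i a \<Longrightarrow> tabR s' i a"
  unfolding tabR_def using fr'_cell_r[of s s' X] fr'_cell_i[of s s' X] by simp

lemma fr'_tabP: "fr' s s' X \<Longrightarrow> Pc i a \<notin> X \<Longrightarrow> tabP s i a \<Longrightarrow> tabP s' i a"
  unfolding tabP_def using fr'_cell_r[of s s' X] fr'_cell_i[of s s' X] by simp

lemma fr'_Pii: "fr' s s' X \<Longrightarrow> Pc i a \<notin> X \<Longrightarrow> rmem s' (Pc i a) = rmem s (Pc i a)"
  using fr'_cell_r[of s s' X] by simp

lemma fr'_ROWS: "fr' s s' X \<Longrightarrow> (\<forall>i a. k \<le> i \<longrightarrow> Rc i a \<notin> X \<and> Fc i a \<notin> X \<and> Pc i a \<notin> X) \<Longrightarrow>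
   ROWS s k \<Longrightarrow> ROWS s' k"
  unfolding ROWS_def using fr'_tabR[of s s' X] fr'_tabP[of s s' X] fr'_Pii[of s s' X] by simp

lemma notinX: "X \<subseteq> {Rc i a, Fc i a, Pc i a} \<Longrightarrow> (i',a') \<noteq> (i,a) \<Longrightarrow>
   Rc i' a' \<notin> X \<and> Fc i' a' \<notin> X \<and> Pc i' a' \<notin> X"
proof (intro conjI notI)
  assume X: "X \<subseteq> {Rc i a, Fc i a, Pc i a}" and ne: "(i',a') \<noteq> (i,a)"
  { assume "Rc i' a' \<in> X" then have "Rc i' a' \<in> {Rc i a, Fc i a, Pc i a}" using X by blast
    then show False using ne by simp }
  { assume "Fc i' a' \<in> X" then have "Fc i' a' \<in> {Rc i a, Fc i a, Pc i a}" using X by blast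
    then show False using ne by simp }
  { assume "Pc i' a' \<in> X" then have "Pc i' a' \<in> {Rc i a, Fc i a, Pc i a}" using X by blast
    then show False using ne by simp }
qed

lemma fr'_DONE:
  assumes f: "fr' s s' X" and X: "X \<subseteq> {Rc i a, Fc i a, Pc i a}" and ia: "i < a" and D: "DONE s i a"
  shows "DONE s' i a"
proof -
  have "ROWS s' (Suc i)"
    by (rule fr'_ROWS[OF f _]) (use notinX[OF X] D in \<open>auto simp: DONE_def\<close>)
  moreover have "Pc i i \<notin> X"
  proof
    assume "Pc i i \<in> X"
    with X have "Pc i i \<in> {Rc i a, Fc i a, Pc i a}" by blast
    then show False using ia by simp
  qed
  then have "rmem s' (Pc i i) = 0"
    using fr'_Pii[OF f, of i i] D by (auto simp: DONE_def)
  moreover have "tabR s' i a' \<and> tabP s' i a'" if "i < a'" "a' < a" for a'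
    using fr'_tabR[OF f, of i a'] fr'_tabP[OF f, of i a'] notinX[OF X, of i a'] that D by (auto simp: DONE_def)
  ultimately show ?thesis unfolding DONE_def by blast
qed

lemma fr'_inp: "fr' s s' X \<Longrightarrow> (\<forall>c\<in>X. fst c \<ge> 10 \<or> fst c \<le> -10) \<Longrightarrow> inp s \<Longrightarrow> inp s'"
proof -
  assume f: "fr' s s' X" and X: "\<forall>c\<in>X. fst c \<ge> 10 \<or> fst c \<le> -10" and i: "inp s"
  have nx: "c \<notin> X" if "fst c = 0 \<or> fst c = 1" for c using X that by force
  have r: "rmem s' c = rmem s c" if "fst c = 0 \<or> fst c = 1" for c
    by (rule fr'_cell_r[OF f nx[OF that]]) (use that in auto)
  have ii: "imem s' (0,0) = imem s (0,0)" by (rule fr'_cell_i[OF f nx]) auto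
  show "inp s'" using i r ii unfolding inp_def by simp
qed

lemma fr'_Sok: "fr' s s' X \<Longrightarrow> (\<forall>c\<in>X. fst c \<ge> 10 \<or> fst c \<le> -10) \<Longrightarrow> Sok s k \<Longrightarrow> Sok s' k"
proof -
  assume f: "fr' s s' X" and X: "\<forall>c\<in>X. fst c \<ge> 10 \<or> fst c \<le> -10" and i: "Sok s k"
  have nx: "c \<notin> X" if "fst c = 2" for c using X that by force
  have r: "rmem s' c = rmem s c" if "fst c = 2" for c
    by (rule fr'_cell_r[OF f nx[OF that]]) (use that in auto)
  show "Sok s' k" using i r unfolding Sok_def by simp
qed

lemma fr_ROWS: "fr s s' \<Longrightarrow> ROWS s k \<Longrightarrow> ROWS s' k"
  unfolding fr_def ROWS_def tabR_def tabP_def Pc_def Rc_def Fc_def by simp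

lemma fr_DONE: "fr s s' \<Longrightarrow> DONE s i a \<Longrightarrow> DONE s' i a"
  unfolding DONE_def using fr_ROWS[of s s'] unfolding fr_def tabR_def tabP_def Pc_def Rc_def Fc_def by simp

lemma fr_inp: "fr s s' \<Longrightarrow> inp s \<Longrightarrow> inp s'"
  unfolding fr_def inp_def by simp

lemma fr_Sok: "fr s s' \<Longrightarrow> Sok s k \<Longrightarrow> Sok s' k"
  unfolding fr_def Sok_def by simp

definition RI :: "nat \<Rightarrow> nat \<Rightarrow> nat \<Rightarrow> state \<Rightarrow> bool" where
  "RI i a k s \<longleftrightarrow> base s \<and> DONE s i a \<and> imem s (2,0) = int i \<and> imem s (2,1) = int a \<and> i < a \<and> a \<le> p
     \<and> (\<exists>b. imem s (2,2) = int b \<and> Suc i \<le> b \<and> b \<le> a \<and> k = a - b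
          \<and> rmem s (3,0) = fst (foldl (mstep (cR i a)) (cR i a a, a) [Suc i..<b])
          \<and> imem s (2,3) = int (snd (foldl (mstep (cR i a)) (cR i a a, a) [Suc i..<b])))"

lemma RB_step:
  assumes I: "RI i a (Suc k) s" and g: "bval gb s"
  shows "RI i a k (sl RB s)"
proof -
  from I obtain b where b: "imem s (2,2) = int b" "Suc i \<le> b" "b \<le> a" "Suc k = a - b"
    "rmem s (3,0) = fst (foldl (mstep (cR i a)) (cR i a a, a) [Suc i..<b])"
    "imem s (2,3) = int (snd (foldl (mstep (cR i a)) (cR i a a, a) [Suc i..<b]))"
    and B: "base s" "DONE s i a" "imem s (2,0) = int i" "imem s (2,1) = int a" "i < a" "a \<le> p"
    unfolding RI_def by blast
  have ba: "b < a" using b by simp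
  have t1: "tabR s i b" using B(2) b(2) ba unfolding DONE_def by simp
  have t2: "tabR s b a" using B(2) b(2) ba B(6) unfolding DONE_def ROWS_def by simp
  have Sa: "rmem s (2, int a) = S a" and Sb: "rmem s (2, int b) = S b"
    using B(1) B(6) ba unfolding base_def Sok_def by auto
  have ab: "rmem s (1,0) = \<alpha>" "rmem s (1,1) = \<beta>" using B(1) unfolding base_def inp_def by auto
  define fo where "fo = foldl (mstep (cR i a)) (cR i a a, a) [Suc i..<b]"
  have cand: "cR i a b = max (fst (D 0 i b)) (fst (D 1 b a)) + \<alpha> + \<beta> * (S a - S b)"
    using ba by (simp add: cR_def)
  have fo': "foldl (mstep (cR i a)) (cR i a a, a) [Suc i..<Suc b] = mstep (cR i a) fo b"
    using b(2) unfolding fo_def by simp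
  let ?s' = "sl RB s"
  have fr: "fr s ?s'" unfolding fr_def RB_def maxcand_def upd_def by simp
  have regs: "imem ?s' (2,0) = int i" "imem ?s' (2,1) = int a" "imem ?s' (2,2) = int (Suc b)"
    using B b unfolding RB_def maxcand_def upd_def by simp_all
  have vals: "rmem ?s' (3,0) = fst (mstep (cR i a) fo b) \<and> imem ?s' (2,3) = int (snd (mstep (cR i a) fo b))"
    using t1 t2 B b Sa Sb ab unfolding RB_def maxcand_def upd_def tabR_def Rc_def Fc_def mstep_def cand fo_def[symmetric]
    by (auto simp: max_def)
  have used: "used ?s'" using B(1,3,4,6) b ba unfolding base_def used_def IU_def RU_def RB_def maxcand_def upd_def by simp
  show ?thesis unfolding RI_def
    using fr_DONE[OF fr B(2)] fr_inp[OF fr] fr_Sok[OF fr] B(1) used regs vals fo' b ba B(5,6)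
    unfolding base_def
    by (intro conjI exI[of _ "Suc b"]) (auto simp: fo_def)
qed

lemma fr_tabR: "fr s s' \<Longrightarrow> tabR s i a \<Longrightarrow> tabR s' i a"
  unfolding fr_def tabR_def Rc_def Fc_def by simp

definition PLI :: "nat \<Rightarrow> nat \<Rightarrow> nat \<Rightarrow> state \<Rightarrow> bool" where
  "PLI i a k s \<longleftrightarrow> base s \<and> DONE s i a \<and> tabR s i a \<and> imem s (2,0) = int i \<and> imem s (2,1) = int a \<and> i < a \<and> a \<le> p
     \<and> (\<exists>b. imem s (2,2) = int b \<and> Suc i \<le> b \<and> b \<le> a \<and> k = a - b
          \<and> rmem s (3,0) = fst (foldl (mstep (cP i a)) (cP i a i, i) [Suc i..<b])
          \<and> imem s (2,3) = int (snd (foldl (mstep (cP i a)) (cP i a i, i) [Suc i..<b])))"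

lemma PB_step:
  assumes I: "PLI i a (Suc k) s" and g: "bval gb s"
  shows "PLI i a k (sl PB s)"
proof -
  from I obtain b where b: "imem s (2,2) = int b" "Suc i \<le> b" "b \<le> a" "Suc k = a - b"
    "rmem s (3,0) = fst (foldl (mstep (cP i a)) (cP i a i, i) [Suc i..<b])"
    "imem s (2,3) = int (snd (foldl (mstep (cP i a)) (cP i a i, i) [Suc i..<b]))"
    and B: "base s" "DONE s i a" "imem s (2,0) = int i" "imem s (2,1) = int a" "i < a" "a \<le> p" "tabR s i a"
    unfolding PLI_def by blast
  have ba: "b < a" using b by simp
  have t1: "tabP s i b" using B(2) b(2) ba unfolding DONE_def by simp
  have t2: "tabR s b a" using B(2) b(2) ba B(6) unfolding DONE_def ROWS_def by simp
  have Sa: "rmem s (2, int a) = S a" and Sb: "rmem s (2, int b) = S b"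
    using B(1) B(6) ba unfolding base_def Sok_def by auto
  have ab: "rmem s (1,0) = \<alpha>" "rmem s (1,1) = \<beta>" using B(1) unfolding base_def inp_def by auto
  define fo where "fo = foldl (mstep (cP i a)) (cP i a i, i) [Suc i..<b]"
  have cand: "cP i a b = max (fst (D 2 i b)) (fst (D 1 b a)) + \<alpha> + \<beta> * (S a - S b)"
    by (simp add: cP_def)
  have fo': "foldl (mstep (cP i a)) (cP i a i, i) [Suc i..<Suc b] = mstep (cP i a) fo b"
    using b(2) unfolding fo_def by simp
  let ?s' = "sl PB s"
  have fr: "fr s ?s'" unfolding fr_def PB_def maxcand_def upd_def by simp
  have regs: "imem ?s' (2,0) = int i" "imem ?s' (2,1) = int a" "imem ?s' (2,2) = int (Suc b)"
    using B b unfolding PB_def maxcand_def upd_def by simp_all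
  have vals: "rmem ?s' (3,0) = fst (mstep (cP i a) fo b) \<and> imem ?s' (2,3) = int (snd (mstep (cP i a) fo b))"
    using t1 t2 B b Sa Sb ab unfolding PB_def maxcand_def upd_def tabR_def tabP_def Pc_def Fc_def mstep_def cand fo_def[symmetric]
    by (auto simp: max_def)
  have used: "used ?s'" using B(1,3,4,6) b ba unfolding base_def used_def IU_def RU_def PB_def maxcand_def upd_def by simp
  show ?thesis unfolding PLI_def
    using fr_DONE[OF fr B(2)] fr_inp[OF fr] fr_Sok[OF fr] fr_tabR[OF fr B(7)] B(1) used regs vals fo' b ba B(5,6)
    unfolding base_def
    by (intro conjI exI[of _ "Suc b"]) (auto simp: fo_def)
qed

end


definition PreR :: com where
  "PreR = Seq (rset 0 (RAdd (RL (pos (ireg 0)) (pos (dec (ireg 1)))) (RMul gaE (RL (IC 0) (dec (ireg 1))))))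
          (Seq (iset 3 (ireg 1)) (iset 2 (inc (ireg 0))))"

definition Mid :: com where
  "Mid = Seq (RStore (pos (ireg 0)) (ngt (ireg 1)) (rreg 0))
    (Seq (IStore (pos (ireg 0)) (ngt (ireg 1)) (ireg 3))
    (Seq (If (BAnd (ILe (ireg 3) (ireg 1)) (ILe (ireg 1) (ireg 3)))
             (IStore (ngt (ireg 0)) (pos (ireg 1)) (dec (ireg 1)))
             (IStore (ngt (ireg 0)) (pos (ireg 1)) (IL (ngt (ireg 0)) (pos (ireg 3)))))
    (Seq (If (ILe (ireg 1) (inc (ireg 0)))
             (RStore (ngt (ireg 0)) (pos (ireg 1)) (RC 0))
             (RStore (ngt (ireg 0)) (pos (ireg 1)) (rreg 0)))
    (Seq (rset 1 (RL (pos (ireg 0)) (pos (ireg 0))))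
    (Seq (rset 2 (RL (ngt (ireg 0)) (pos (ireg 1))))
    (Seq (If (RLe (rreg 1) (rreg 2)) (rset 0 (candE (rreg 2) (ireg 0))) (rset 0 (candE (rreg 1) (ireg 0))))
    (Seq (iset 3 (ireg 0)) (iset 2 (inc (ireg 0))))))))))"

definition PostP :: com where
  "PostP = Seq (RStore (pos (ireg 0)) (pos (ireg 1)) (rreg 0))
     (Seq (IStore (pos (ireg 0)) (pos (ireg 1)) (ireg 3)) (iset 1 (inc (ireg 1))))"

context M begin

lemma PreR_ok:
  assumes B: "base s" "DONE s i a" "imem s (2,0) = int i" "imem s (2,1) = int a" "i < a" "a \<le> p"
  shows "RI i a (a - Suc i) (sl PreR s)"
proof -
  have a1: "int a - 1 = int (a - 1)" using B(5) by simp
  have Pv: "rmem s (10 + int i, 10 + int (a - 1)) = fst (D 2 i (a - 1))"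
  proof (cases "a - 1 = i")
    case True
    then show ?thesis using B(2) by (simp add: DONE_def Pc_def D2_triv)
  next
    case False
    then have "tabP s i (a - 1)" using B(2,5) unfolding DONE_def by simp
    then show ?thesis by (simp add: tabP_def Pc_def)
  qed
  have H: "\<forall>j<p. rmem s (0, int j) = m j" and gv: "rmem s (1,2) = \<gamma>"
    using B(1) unfolding base_def inp_def by auto
  have "a - 1 < p" using B(5,6) by simp
  then have mv: "rmem s (0, int (a - 1)) = m (a - 1)" using H by blast
  let ?s' = "sl PreR s"
  have fr: "fr s ?s'" unfolding fr_def PreR_def by simp
  have used: "used ?s'" using B(1,3,4,6) unfolding base_def used_def IU_def RU_def PreR_def by simp
  have vals: "rmem ?s' (3,0) = cR i a a" "imem ?s' (2,3) = int a" "imem ?s' (2,2) = int (Suc i)"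
    "imem ?s' (2,0) = int i" "imem ?s' (2,1) = int a"
    using B Pv[folded a1] mv[folded a1] gv unfolding PreR_def by (simp_all add: cR_def)
  show ?thesis unfolding RI_def
    using fr_DONE[OF fr B(2)] fr_inp[OF fr] fr_Sok[OF fr] B(1,5,6) used vals
    unfolding base_def
    by (intro conjI exI[of _ "Suc i"]) auto
qed

lemma Mid_ok:
  assumes I: "RI i a j s" and g: "\<not> bval gb s"
  shows "PLI i a (a - Suc i) (sl Mid s)"
proof -
  from I obtain b where b: "imem s (2,2) = int b" "Suc i \<le> b" "b \<le> a"
    "rmem s (3,0) = fst (foldl (mstep (cR i a)) (cR i a a, a) [Suc i..<b])"
    "imem s (2,3) = int (snd (foldl (mstep (cR i a)) (cR i a a, a) [Suc i..<b]))"
    and B: "base s" "DONE s i a" "imem s (2,0) = int i" "imem s (2,1) = int a" "i < a" "a \<le> p"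
    unfolding RI_def by blast
  have ba: "b = a" using g b B(4) by simp
  have best: "rmem s (3,0) = fst (D 0 i a)" "imem s (2,3) = int (snd (D 0 i a))"
    using b(4,5) ba D0_eq[OF B(5)] by simp_all
  define c where "c = snd (D 0 i a)"
  have Rp: "c = a \<or> (i < c \<and> c < a)" using R_props[OF B(5)] c_def by blast
  have a1: "int a - 1 = int (a - 1)" using B(5) by simp
  have root: "imem s (-10 - int i, 10 + int c) = int (rootR i c)" if "i < c" "c < a"
    using B(2) that unfolding DONE_def tabR_def Fc_def by simp
  have rootR_eq: "rootR i a = (if c = a then a - 1 else rootR i c)"
    using Rp B(5) unfolding c_def by (subst rootR.simps) auto
  have Pii: "rmem s (10 + int i, 10 + int i) = 0" using B(2) by (simp add: DONE_def Pc_def)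
  have Sa: "rmem s (2, int a) = S a" and Si: "rmem s (2, int i) = S i"
    using B(1) B(6) B(5) unfolding base_def Sok_def by auto
  have ab: "rmem s (1,0) = \<alpha>" "rmem s (1,1) = \<beta>" using B(1) unfolding base_def inp_def by auto
  have F1: "fst (D 1 i a) = (if a \<le> Suc i then 0 else fst (D 0 i a))" by (simp add: D1_eq D1_eq')
  have cPi: "cP i a i = max 0 (fst (D 1 i a)) + \<alpha> + \<beta> * (S a - S i)" by (simp add: cP_def D2_triv)
  let ?s' = "sl Mid s"
  have fr: "fr' s ?s' {Rc i a, Fc i a}" unfolding fr'_def Mid_def using B(3,4) by (simp add: Rc_def Fc_def)
  have X: "\<forall>c\<in>{Rc i a, Fc i a}. fst c \<ge> 10 \<or> fst c \<le> -10" by (simp add: Rc_def Fc_def)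
  have used: "used ?s'" using B(1,3,4,6) B(5) unfolding base_def used_def IU_def RU_def Mid_def by simp
  have tR: "tabR ?s' i a"
    using B(3,4) best Rp root rootR_eq a1[symmetric] F1 unfolding tabR_def Mid_def Rc_def Fc_def c_def[symmetric]
    by (cases "c = a") auto
  have vals: "rmem ?s' (3,0) = cP i a i" "imem ?s' (2,3) = int i" "imem ?s' (2,2) = int (Suc i)"
    "imem ?s' (2,0) = int i" "imem ?s' (2,1) = int a"
    using B(3,4) best Pii Sa Si ab F1 unfolding Mid_def cPi by (auto simp: max_def)
  show ?thesis unfolding PLI_def
    using fr'_DONE[OF fr _ B(5) B(2)] fr'_inp[OF fr X] fr'_Sok[OF fr X] B(1,5,6) used vals tR
    unfolding base_def
    by (intro conjI exI[of _ "Suc i"]) auto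
qed

definition AI :: "nat \<Rightarrow> nat \<Rightarrow> state \<Rightarrow> bool" where
  "AI i k s \<longleftrightarrow> base s \<and> imem s (2,0) = int i \<and> i < p
     \<and> (\<exists>a. DONE s i a \<and> imem s (2,1) = int a \<and> i < a \<and> a \<le> Suc p \<and> k = Suc p - a)"

lemma PostP_ok:
  assumes I: "PLI i a j s" and g: "\<not> bval gb s"
  shows "AI i (p - a) (sl PostP s)"
proof -
  from I obtain b where b: "imem s (2,2) = int b" "Suc i \<le> b" "b \<le> a"
    "rmem s (3,0) = fst (foldl (mstep (cP i a)) (cP i a i, i) [Suc i..<b])"
    "imem s (2,3) = int (snd (foldl (mstep (cP i a)) (cP i a i, i) [Suc i..<b]))"
    and B: "base s" "DONE s i a" "imem s (2,0) = int i" "imem s (2,1) = int a" "i < a" "a \<le> p" "tabR s i a"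
    unfolding PLI_def by blast
  have ba: "b = a" using g b B(4) by simp
  have best: "rmem s (3,0) = fst (D 2 i a)" "imem s (2,3) = int (snd (D 2 i a))"
    using b(4,5) ba D2_eq[OF B(5)] by simp_all
  let ?s' = "sl PostP s"
  have fr: "fr' s ?s' {Pc i a}" unfolding fr'_def PostP_def using B(3,4) by (simp add: Pc_def)
  have X: "\<forall>c\<in>{Pc i a}. fst c \<ge> 10 \<or> fst c \<le> -10" by (simp add: Pc_def)
  have used: "used ?s'" using B(1,3,4,6) B(5) unfolding base_def used_def IU_def RU_def PostP_def by simp
  have tP: "tabP ?s' i a" using B(3,4) best unfolding tabP_def PostP_def Pc_def by simp
  have tR: "tabR ?s' i a" by (rule fr'_tabR[OF fr _ _ B(7)]) simp_all
  have D': "DONE ?s' i a" by (rule fr'_DONE[OF fr _ B(5) B(2)]) auto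
  have D'': "DONE ?s' i (Suc a)" using D' tP tR unfolding DONE_def using less_Suc_eq by auto
  have vals: "imem ?s' (2,0) = int i" "imem ?s' (2,1) = int (Suc a)"
    using B(3,4) unfolding PostP_def by simp_all
  show ?thesis unfolding AI_def
    using fr'_inp[OF fr X] fr'_Sok[OF fr X] B(1,5,6) used vals D''
    unfolding base_def
    by (intro conjI exI[of _ "Suc a"]) auto
qed

end


lemma tot_seq': "tot c1 s QQ n1 \<Longrightarrow> (\<And>s1. QQ s1 \<Longrightarrow> tot c2 s1 Q n2) \<Longrightarrow> tot (Seq c1 c2) s Q (n1 + n2)"
  by (rule tot_Seq) (erule tot_mono, auto)

lemma tot_while':
  assumes step: "\<And>k s. I k s \<Longrightarrow> bval b s \<Longrightarrow> 0 < k \<and> tot c s (I (k - 1)) n"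
    and I: "I k s" and K: "k \<le> K" and Q: "\<And>j s. I j s \<Longrightarrow> \<not> bval b s \<Longrightarrow> Q s"
  shows "tot (While b c) s Q (K * (n + 1 + bcost b) + 1 + bcost b)"
proof -
  have A: "tot (While b c) s (\<lambda>s'. \<exists>j. I j s' \<and> \<not> bval b s') (k * (n + 1 + bcost b) + 1 + bcost b)"
    by (rule tot_While[OF step I])
  have M: "k * (n + 1 + bcost b) \<le> K * (n + 1 + bcost b)" using K by (rule mult_right_mono) simp
  show ?thesis by (rule tot_mono[OF A]) (use Q M in auto)
qed

definition ABody :: com where
  "ABody = Seq PreR (Seq (While gb RB) (Seq Mid (Seq (While gb PB) PostP)))"
abbreviation ga :: bexp where "ga \<equiv> ILe (ireg 1) pp"
definition IPre :: com where
  "IPre = Seq (RStore (pos (ireg 0)) (pos (ireg 0)) (RC 0)) (iset 1 (inc (ireg 0)))"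
definition IPost :: com where "IPost = iset 0 (dec (ireg 0))"
definition IBody :: com where "IBody = Seq IPre (Seq (While ga ABody) IPost)"
abbreviation gi :: bexp where "gi \<equiv> ILe (IC 0) (ireg 0)"
definition DP :: com where "DP = Seq (iset 0 (dec pp)) (While gi IBody)"

context M begin

definition LR :: nat where "LR = p * (slc RB + 1 + bcost gb) + 1 + bcost gb"
definition LP :: nat where "LP = p * (slc PB + 1 + bcost gb) + 1 + bcost gb"
definition nA :: nat where "nA = slc PreR + (LR + (slc Mid + (LP + slc PostP)))"
definition LA :: nat where "LA = p * (nA + 1 + bcost ga) + 1 + bcost ga"
definition nI :: nat where "nI = slc IPre + (LA + slc IPost)"
definition LI :: nat where "LI = p * (nI + 1 + bcost gi) + 1 + bcost gi"

lemma RB_loop: "RI i a k s \<Longrightarrow> bval gb s \<Longrightarrow> 0 < k \<and> tot RB s (RI i a (k - 1)) (slc RB)"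
proof -
  assume I: "RI i a k s" and g: "bval gb s"
  have k: "0 < k" using I g unfolding RI_def by auto
  then obtain k' where k': "k = Suc k'" by (cases k) auto
  show ?thesis using k RB_step[OF I[unfolded k'] g] k'
    by (auto intro!: tot_sl simp: RB_def maxcand_def upd_def)
qed

lemma PB_loop: "PLI i a k s \<Longrightarrow> bval gb s \<Longrightarrow> 0 < k \<and> tot PB s (PLI i a (k - 1)) (slc PB)"
proof -
  assume I: "PLI i a k s" and g: "bval gb s"
  have k: "0 < k" using I g unfolding PLI_def by auto
  then obtain k' where k': "k = Suc k'" by (cases k) auto
  show ?thesis using k PB_step[OF I[unfolded k'] g] k'
    by (auto intro!: tot_sl simp: PB_def maxcand_def upd_def)
qed

lemma A_step: "AI i k s \<Longrightarrow> bval ga s \<Longrightarrow> 0 < k \<and> tot ABody s (AI i (k - 1)) nA"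
proof -
  assume I: "AI i k s" and g: "bval ga s"
  from I obtain a where a: "DONE s i a" "imem s (2,1) = int a" "i < a" "a \<le> Suc p" "k = Suc p - a"
    and B: "base s" "imem s (2,0) = int i" "i < p" unfolding AI_def by blast
  have ap: "a \<le> p" using g a(2) B(1) by (simp add: base_def inp_def)
  have k: "0 < k" using a ap by simp
  have "tot ABody s (AI i (p - a)) nA"
    unfolding ABody_def nA_def
  proof (rule tot_seq'[where QQ = "RI i a (a - Suc i)"])
    show "tot PreR s (RI i a (a - Suc i)) (slc PreR)"
      by (rule tot_sl) (use PreR_ok[OF B(1) a(1) B(2) a(2) a(3) ap] in \<open>simp_all add: PreR_def\<close>)
  next
    fix s1 assume s1: "RI i a (a - Suc i) s1"
    show "tot (Seq (While gb RB) (Seq Mid (Seq (While gb PB) PostP))) s1 (AI i (p - a)) (LR + (slc Mid + (LP + slc PostP)))"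
    proof (rule tot_seq'[where QQ = "\<lambda>s. \<exists>j. RI i a j s \<and> \<not> bval gb s"])
      show "tot (While gb RB) s1 (\<lambda>s. \<exists>j. RI i a j s \<and> \<not> bval gb s) LR"
        unfolding LR_def by (rule tot_while'[OF RB_loop s1]) (use ap in auto)
    next
      fix s2 assume "\<exists>j. RI i a j s2 \<and> \<not> bval gb s2"
      then obtain j where s2: "RI i a j s2" "\<not> bval gb s2" by blast
      show "tot (Seq Mid (Seq (While gb PB) PostP)) s2 (AI i (p - a)) (slc Mid + (LP + slc PostP))"
      proof (rule tot_seq'[where QQ = "PLI i a (a - Suc i)"])
        show "tot Mid s2 (PLI i a (a - Suc i)) (slc Mid)"
          by (rule tot_sl) (use Mid_ok[OF s2] in \<open>simp_all add: Mid_def\<close>)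
      next
        fix s3 assume s3: "PLI i a (a - Suc i) s3"
        show "tot (Seq (While gb PB) PostP) s3 (AI i (p - a)) (LP + slc PostP)"
        proof (rule tot_seq'[where QQ = "\<lambda>s. \<exists>j. PLI i a j s \<and> \<not> bval gb s"])
          show "tot (While gb PB) s3 (\<lambda>s. \<exists>j. PLI i a j s \<and> \<not> bval gb s) LP"
            unfolding LP_def by (rule tot_while'[OF PB_loop s3]) (use ap in auto)
        next
          fix s4 assume "\<exists>j. PLI i a j s4 \<and> \<not> bval gb s4"
          then obtain j where s4: "PLI i a j s4" "\<not> bval gb s4" by blast
          show "tot PostP s4 (AI i (p - a)) (slc PostP)"
            by (rule tot_sl) (use PostP_ok[OF s4] in \<open>simp_all add: PostP_def\<close>)
        qed
      qed
    qed
  qed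
  moreover have "p - a = k - 1" using a(5) by simp
  ultimately show ?thesis using k by simp
qed

definition II :: "nat \<Rightarrow> state \<Rightarrow> bool" where
  "II k s \<longleftrightarrow> base s \<and> k \<le> p \<and> imem s (2,0) = int k - 1 \<and> ROWS s k"

lemma I_step: "II k s \<Longrightarrow> bval gi s \<Longrightarrow> 0 < k \<and> tot IBody s (II (k - 1)) nI"
proof -
  assume I: "II k s" and g: "bval gi s"
  then have B: "base s" "k \<le> p" "imem s (2,0) = int k - 1" "ROWS s k" unfolding II_def by auto
  have k: "0 < k" using g B(3) by simp
  define i where "i = k - 1"
  have ki: "k = Suc i" and ip: "i < p" using k B(2) unfolding i_def by auto
  have ri: "imem s (2,0) = int i" using B(3) ki by simp
  let ?s1 = "sl IPre s"
  have fr1: "fr' s ?s1 {Pc i i}" unfolding fr'_def IPre_def using ri by (simp add: Pc_def)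
  have X1: "\<forall>c\<in>{Pc i i}. fst c \<ge> 10 \<or> fst c \<le> -10" by (simp add: Pc_def)
  have used1: "used ?s1" using B(1,2) ri ip unfolding base_def used_def IU_def RU_def IPre_def by simp
  have R1: "ROWS ?s1 (Suc i)" by (rule fr'_ROWS[OF fr1 _ B(4)[unfolded ki]]) auto
  have P1: "rmem ?s1 (Pc i i) = 0" using ri unfolding IPre_def Pc_def by simp
  have D1: "DONE ?s1 i (Suc i)" using R1 P1 unfolding DONE_def by auto
  have AI1: "AI i (p - i) ?s1"
    using D1 fr'_inp[OF fr1 X1] fr'_Sok[OF fr1 X1] used1 B(1) ri ip
    unfolding AI_def base_def by (intro conjI exI[of _ "Suc i"]) (auto simp: IPre_def)
  have "tot IBody s (II i) nI"
    unfolding IBody_def nI_def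
  proof (rule tot_seq'[where QQ = "AI i (p - i)"])
    show "tot IPre s (AI i (p - i)) (slc IPre)" by (rule tot_sl) (use AI1 in \<open>simp_all add: IPre_def\<close>)
  next
    fix s2 assume s2: "AI i (p - i) s2"
    show "tot (Seq (While ga ABody) IPost) s2 (II i) (LA + slc IPost)"
    proof (rule tot_seq'[where QQ = "\<lambda>s. \<exists>j. AI i j s \<and> \<not> bval ga s"])
      show "tot (While ga ABody) s2 (\<lambda>s. \<exists>j. AI i j s \<and> \<not> bval ga s) LA"
        unfolding LA_def by (rule tot_while'[OF A_step s2]) auto
    next
      fix s3 assume "\<exists>j. AI i j s3 \<and> \<not> bval ga s3"
      then obtain j a where a: "DONE s3 i a" "imem s3 (2,1) = int a" "a \<le> Suc p" "\<not> bval ga s3"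
        and B3: "base s3" "imem s3 (2,0) = int i"
        unfolding AI_def by blast
      have ap: "a = Suc p" using a B3(1) by (simp add: base_def inp_def)
      have R3a: "\<forall>i' a'. i \<le> i' \<longrightarrow> i' < a' \<longrightarrow> a' \<le> p \<longrightarrow> tabR s3 i' a' \<and> tabP s3 i' a'"
      proof (intro allI impI)
        fix i' a' assume h: "i \<le> i'" "i' < a'" "a' \<le> p"
        show "tabR s3 i' a' \<and> tabP s3 i' a'"
        proof (cases "i' = i")
          case True then show ?thesis using a(1) ap h unfolding DONE_def by simp
        next
          case False then show ?thesis using a(1) h unfolding DONE_def ROWS_def by simp
        qed
      qed
      have R3b: "\<forall>i'. i \<le> i' \<longrightarrow> i' < p \<longrightarrow> rmem s3 (Pc i' i') = 0"
      proof (intro allI impI)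
        fix i' assume h: "i \<le> i'" "i' < p"
        show "rmem s3 (Pc i' i') = 0"
        proof (cases "i' = i")
          case True then show ?thesis using a(1) unfolding DONE_def by simp
        next
          case False then show ?thesis using a(1) h unfolding DONE_def ROWS_def by simp
        qed
      qed
      have R3: "ROWS s3 i" unfolding ROWS_def using R3a R3b by blast
      let ?s4 = "sl IPost s3"
      have fr4: "fr s3 ?s4" unfolding fr_def IPost_def by simp
      have used4: "used ?s4" using B3 ip unfolding base_def used_def IU_def RU_def IPost_def by simp
      have II4: "II i ?s4"
        using fr_ROWS[OF fr4 R3] fr_inp[OF fr4] fr_Sok[OF fr4] B3 used4 ip
        unfolding II_def base_def by (auto simp: IPost_def)
      show "tot IPost s3 (II i) (slc IPost)" by (rule tot_sl) (use II4 in \<open>simp_all add: IPost_def\<close>)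
    qed
  qed
  then show ?thesis using k i_def by simp
qed

lemma DP_ok: "base s \<Longrightarrow> tot DP s (\<lambda>s. base s \<and> ROWS s 0) (slc (iset 0 (dec pp)) + LI)"
proof -
  assume B: "base s"
  let ?s1 = "sl (iset 0 (dec pp)) s"
  have fr: "fr s ?s1" unfolding fr_def by simp
  have used1: "used ?s1" using B unfolding base_def used_def IU_def by simp
  have R: "ROWS ?s1 p" unfolding ROWS_def by simp
  have II1: "II p ?s1" using fr_inp[OF fr] fr_Sok[OF fr] used1 B R unfolding II_def base_def inp_def by simp
  show ?thesis unfolding DP_def
  proof (rule tot_seq'[where QQ = "II p"])
    show "tot (iset 0 (dec pp)) s (II p) (slc (iset 0 (dec pp)))" by (rule tot_sl) (use II1 in simp_all)
  next
    fix s1 assume "II p s1"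
    show "tot (While gi IBody) s1 (\<lambda>s. base s \<and> ROWS s 0) LI"
      unfolding LI_def
    proof (rule tot_while'[OF I_step \<open>II p s1\<close>])
      fix j s assume "II j s" "\<not> bval gi s"
      then show "base s \<and> ROWS s 0" unfolding II_def by (cases j) auto
    qed auto
  qed
qed

end


context L begin

lemma chR_split: "i < a \<Longrightarrow> i < snd (D 0 i a) \<Longrightarrow> snd (D 0 i a) < a \<Longrightarrow>
  chR i a = chR i (snd (D 0 i a)) @ [Some (tree (snd (D 0 i a)) a)] \<and> rootR i a = rootR i (snd (D 0 i a))"
  by (simp add: chR.simps[of i a] rootR.simps[of i a])

lemma chR_mark: "i < a \<Longrightarrow> snd (D 0 i a) = a \<Longrightarrow>
  chR i a = chP i (a - 1) @ [None] \<and> rootR i a = a - 1"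
  by (simp add: chR.simps[of i a] rootR.simps[of i a])

lemma chP_split: "i < a \<Longrightarrow>
  chP i a = chP i (snd (D 2 i a)) @ [Some (tree (snd (D 2 i a)) a)]"
  using P_props[of i a] by (simp add: chP.simps[of i a])

lemma tree_node: "Suc i < a \<Longrightarrow> tree i a = Node (rootR i a) (chR i a)"
  by (simp add: tree.simps[of i a])

lemma tree_root: "ct_root (tree i a) = (if a \<le> Suc i then i else rootR i a)"
  by (simp add: tree.simps[of i a])

lemma child_edges: "Suc i < a \<Longrightarrow> Some t \<in> set (chR i a) \<Longrightarrow>
   (ct_root t, rootR i a) \<in> ct_edges (tree i a) \<and> ct_edges t \<subseteq> ct_edges (tree i a)"
proof -
  assume a: "Suc i < a" and t: "Some t \<in> set (chR i a)"
  have "ct_edges (tree i a) = (\<Union>x\<in>set (chR i a). case x of None \<Rightarrow> {} | Some t \<Rightarrow> insert (ct_root t, rootR i a) (ct_edges t))"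
    using a by (simp add: tree_node)
  moreover have "insert (ct_root t, rootR i a) (ct_edges t) \<subseteq> (\<Union>x\<in>set (chR i a). case x of None \<Rightarrow> {} | Some t \<Rightarrow> insert (ct_root t, rootR i a) (ct_edges t))"
    using t by (intro subsetI UN_I[of "Some t"]) auto
  ultimately show ?thesis by auto
qed

end

lemma edges_root: "ct_wf T \<Longrightarrow> (x,y) \<in> ct_edges T \<Longrightarrow> x \<in> ct_verts T \<and> x \<noteq> ct_root T"
proof (induction T arbitrary: x y)
  case (Node r es)
  from Node.prems(2) obtain t where t: "Some t \<in> set es" and xy: "(x,y) = (ct_root t, r) \<or> (x,y) \<in> ct_edges t"
    by (auto split: option.splits)
  have wft: "ct_wf t" using Node.prems(1) t by force
  have xt: "x \<in> ct_verts t"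
  proof (cases "(x,y) = (ct_root t, r)")
    case True then show ?thesis by (cases t) auto
  next
    case False then show ?thesis using xy Node.IH[OF t _ wft] by auto
  qed
  have es: "es \<noteq> []" using t by auto
  then have "length (filter (\<lambda>x. x = None) es) = 1" using Node.prems(1) by simp
  then have "None \<in> set es" by (metis (mono_tags) filter_False length_0_conv zero_neq_one)
  then obtain j where j: "j < length es" "es ! j = None" by (metis in_set_conv_nth)
  obtain k where k: "k < length es" "es ! k = Some t" using t by (metis in_set_conv_nth)
  have jk: "j \<noteq> k" using j k by auto
  have W: "\<forall>i j. i < j \<and> j < length es \<longrightarrow> entry_set r (es ! i) \<inter> entry_set r (es ! j) = {}"
    using Node.prems(1) by simp
  have disj: "entry_set r (es ! j) \<inter> entry_set r (es ! k) = {}"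
  proof (cases "j < k")
    case True then show ?thesis using W k(1) by blast
  next
    case False then have "k < j" using jk by simp
    then show ?thesis using W j(1) by blast
  qed
  then have "r \<notin> ct_verts t" using j k by (simp add: entry_set_def)
  moreover have "x \<in> (\<Union>x\<in>set es. case x of None \<Rightarrow> {} | Some t \<Rightarrow> ct_verts t)"
    using xt t by (intro UN_I[of "Some t"]) auto
  ultimately show ?case using xt by auto
qed


abbreviation gw :: bexp where "gw \<equiv> ILe (ireg 12) (IC 0)"
abbreviation isEq :: "iexp \<Rightarrow> iexp \<Rightarrow> bexp" where "isEq x y \<equiv> BAnd (ILe x y) (ILe y x)"

definition WB :: com where
  "WB = If (ILe (ireg 10) (IC 0))
     (Seq (iset 3 (IL (pos (ireg 5)) (ngt (ireg 9))))
        (If (isEq (ireg 3) (ireg 9))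
           (Seq (iset 10 (IC 1)) (iset 9 (dec (ireg 9))))
           (If (ILe (ireg 3) (ireg 4)) (iset 12 (IC 1)) (iset 9 (ireg 3)))))
     (Seq (iset 3 (IL (pos (ireg 5)) (pos (ireg 9))))
        (If (ILe (ireg 3) (ireg 4)) (iset 12 (IC 1)) (iset 9 (ireg 3))))"

context M begin

definition frO :: "state \<Rightarrow> state \<Rightarrow> bool" where
  "frO s s' \<longleftrightarrow> rmem s' = rmem s \<and> (\<forall>x y. x \<noteq> 1 \<longrightarrow> x \<noteq> 2 \<longrightarrow> imem s' (x,y) = imem s (x,y))"

lemma frO_ROWS: "frO s s' \<Longrightarrow> ROWS s k \<Longrightarrow> ROWS s' k"
  unfolding frO_def ROWS_def tabR_def tabP_def Pc_def Rc_def Fc_def by simp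
lemma frO_inp: "frO s s' \<Longrightarrow> inp s \<Longrightarrow> inp s'"
  unfolding frO_def inp_def by simp
lemma frO_Sok: "frO s s' \<Longrightarrow> Sok s k \<Longrightarrow> Sok s' k"
  unfolding frO_def Sok_def by simp

definition rbase :: "state \<Rightarrow> bool" where "rbase s \<longleftrightarrow> base s \<and> ROWS s 0"

lemma frO_rbase: "frO s s' \<Longrightarrow> used s' \<Longrightarrow> rbase s \<Longrightarrow> rbase s'"
  unfolding rbase_def base_def using frO_ROWS frO_inp frO_Sok by blast

definition T0 :: ctree where "T0 = tree 0 p"
definition good :: "nat \<Rightarrow> int \<Rightarrow> bool" where
  "good w x \<longleftrightarrow> (w = ct_root T0 \<longrightarrow> x = -1) \<and> (w \<noteq> ct_root T0 \<longrightarrow> x \<ge> 0 \<and> (w, nat x) \<in> ct_edges T0)"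
definition OUT :: "state \<Rightarrow> nat \<Rightarrow> bool" where
  "OUT s v \<longleftrightarrow> (\<forall>w<v. good w (imem s (1, int w)))"

definition WI :: "nat \<Rightarrow> nat \<Rightarrow> nat \<Rightarrow> int \<Rightarrow> nat \<Rightarrow> nat \<Rightarrow> state \<Rightarrow> bool" where
  "WI v cb cc par r k s \<longleftrightarrow> rbase s \<and> OUT s v \<and> imem s (2,4) = int v \<and> imem s (2,5) = int cb
    \<and> imem s (2,6) = int cc \<and> imem s (2,7) = par \<and> imem s (2,8) = int r \<and> imem s (2,11) = 0
    \<and> Suc cb < cc \<and> cc \<le> p \<and> cb \<le> v \<and> v < cc \<and> r = rootR cb cc \<and> v \<noteq> r
    \<and> ((imem s (2,12) = 0 \<and> imem s (2,10) = 0 \<and> (\<exists>wa. imem s (2,9) = int wa \<and> cb < wa \<and> wa \<le> cc \<and> v < wa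
            \<and> set (chR cb wa) \<subseteq> set (chR cb cc) \<and> rootR cb wa = r \<and> 2 * wa + 1 < k))
     \<or> (imem s (2,12) = 0 \<and> imem s (2,10) = 1 \<and> (\<exists>wa. imem s (2,9) = int wa \<and> v < wa \<and> wa < cc
            \<and> set (chP cb wa) \<subseteq> set (chR cb cc) \<and> 2 * wa < k))
     \<or> (imem s (2,12) = 1 \<and> (\<exists>ar wa. imem s (2,3) = int ar \<and> imem s (2,9) = int wa
            \<and> Some (tree ar wa) \<in> set (chR cb cc) \<and> ar \<le> v \<and> v < wa \<and> cb \<le> ar \<and> wa \<le> cc \<and> wa - ar < cc - cb)))"

lemma WB_frame:
  assumes "imem s (2,4) = int v" "v < p" "imem s (2,9) = int wa" "wa \<le> p" "imem s (2,5) = int cb" "cb \<le> p" "used s"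
  shows "frO s (sl WB s) \<and> used (sl WB s) \<and>
    (\<forall>j. j \<noteq> 3 \<longrightarrow> j \<noteq> 9 \<longrightarrow> j \<noteq> 10 \<longrightarrow> j \<noteq> 12 \<longrightarrow> imem (sl WB s) (2,j) = imem s (2,j))
    \<and> (\<forall>w. imem (sl WB s) (1,w) = imem s (1,w))"
  using assms unfolding frO_def WB_def used_def IU_def by auto

lemma WI_I:
  assumes "rbase s \<and> OUT s v \<and> imem s (2,4) = int v \<and> imem s (2,5) = int cb
    \<and> imem s (2,6) = int cc \<and> imem s (2,7) = par \<and> imem s (2,8) = int r \<and> imem s (2,11) = 0"
    "Suc cb < cc \<and> cc \<le> p \<and> cb \<le> v \<and> v < cc \<and> r = rootR cb cc \<and> v \<noteq> r"
    "(imem s (2,12) = 0 \<and> imem s (2,10) = 0 \<and> (\<exists>wa. imem s (2,9) = int wa \<and> cb < wa \<and> wa \<le> cc \<and> v < wa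
            \<and> set (chR cb wa) \<subseteq> set (chR cb cc) \<and> rootR cb wa = r \<and> 2 * wa + 1 < k))
     \<or> (imem s (2,12) = 0 \<and> imem s (2,10) = 1 \<and> (\<exists>wa. imem s (2,9) = int wa \<and> v < wa \<and> wa < cc
            \<and> set (chP cb wa) \<subseteq> set (chR cb cc) \<and> 2 * wa < k))
     \<or> (imem s (2,12) = 1 \<and> (\<exists>ar wa. imem s (2,3) = int ar \<and> imem s (2,9) = int wa
            \<and> Some (tree ar wa) \<in> set (chR cb cc) \<and> ar \<le> v \<and> v < wa \<and> cb \<le> ar \<and> wa \<le> cc \<and> wa - ar < cc - cb))"
  shows "WI v cb cc par r k s"
  using assms unfolding WI_def by blast

lemma W_step:
  assumes I: "WI v cb cc par r k s" and g: "bval gw s"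
  shows "0 < k \<and> WI v cb cc par r (k - 1) (sl WB s)"
proof -
  have B: "rbase s" "OUT s v" "imem s (2,4) = int v" "imem s (2,5) = int cb"
    "imem s (2,6) = int cc" "imem s (2,7) = par" "imem s (2,8) = int r" "imem s (2,11) = 0"
    "Suc cb < cc" "cc \<le> p" "cb \<le> v" "v < cc" "r = rootR cb cc" "v \<noteq> r"
    using I unfolding WI_def by auto
  have f0: "imem s (2,12) = 0" using I g unfolding WI_def by auto
  have R0: "ROWS s 0" and us: "used s" using B(1) unfolding rbase_def base_def by auto
  let ?s' = "sl WB s"
  have common: "rbase ?s' \<and> OUT ?s' v \<and> imem ?s' (2,4) = int v \<and> imem ?s' (2,5) = int cb
    \<and> imem ?s' (2,6) = int cc \<and> imem ?s' (2,7) = par \<and> imem ?s' (2,8) = int r \<and> imem ?s' (2,11) = 0"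
    if "imem s (2,9) = int wa" "wa \<le> p" for wa
    using WB_frame[OF B(3) _ that B(4) _ us] B frO_rbase[of s ?s'] B(10,12) unfolding OUT_def by auto
  show ?thesis
  proof (cases "imem s (2,10) = 0")
    case True
    then obtain wa where w: "imem s (2,9) = int wa" "cb < wa" "wa \<le> cc" "v < wa"
      "set (chR cb wa) \<subseteq> set (chR cb cc)" "rootR cb wa = r" "2 * wa + 1 < k"
      using I f0 unfolding WI_def by auto
    have k: "0 < k" using w by simp
    define c where "c = snd (D 0 cb wa)"
    have cv: "imem s (Rc cb wa) = int c" using R0 w(2,3) B(10) unfolding ROWS_def tabR_def c_def by simp
    have Rp: "c = wa \<or> (cb < c \<and> c < wa)" using R_props[OF w(2)] c_def by blast
    note C = common[OF w(1) le_trans[OF w(3) B(10)]]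
    show ?thesis
    proof (cases "c = wa")
      case True
      have ch: "chR cb wa = chP cb (wa - 1) @ [None]" "rootR cb wa = wa - 1"
        using chR_mark[OF w(2)] True c_def by auto
      have vr: "v < wa - 1" using w(4,6) ch(2) B(14) by auto
      have regs: "imem ?s' (2,12) = 0" "imem ?s' (2,10) = 1" "imem ?s' (2,9) = int (wa - 1)"
        using f0 \<open>imem s (2,10) = 0\<close> w(1) cv True B(3,4) w(2) unfolding WB_def Rc_def by auto
      have "imem ?s' (2,12) = 0 \<and> imem ?s' (2,10) = 1 \<and> (\<exists>wa'. imem ?s' (2,9) = int wa' \<and> v < wa' \<and> wa' < cc
            \<and> set (chP cb wa') \<subseteq> set (chR cb cc) \<and> 2 * wa' < k - 1)"
        using regs vr w ch by (intro conjI exI[of _ "wa - 1"]) auto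
      then show ?thesis using k by (intro conjI WI_I[OF C]) (use B in auto)
    next
      case False
      then have cw: "cb < c" "c < wa" using Rp by auto
      have ch: "chR cb wa = chR cb c @ [Some (tree c wa)]" "rootR cb wa = rootR cb c"
        using chR_split[OF w(2)] cw c_def by auto
      show ?thesis
      proof (cases "c \<le> v")
        case True
        have regs: "imem ?s' (2,12) = 1" "imem ?s' (2,3) = int c" "imem ?s' (2,9) = int wa"
          using f0 \<open>imem s (2,10) = 0\<close> w(1) cv False True B(3,4) unfolding WB_def Rc_def by auto
        have "Some (tree c wa) \<in> set (chR cb cc)" using w(5) ch by auto
        then have "imem ?s' (2,12) = 1 \<and> (\<exists>ar wa'. imem ?s' (2,3) = int ar \<and> imem ?s' (2,9) = int wa'
            \<and> Some (tree ar wa') \<in> set (chR cb cc) \<and> ar \<le> v \<and> v < wa' \<and> cb \<le> ar \<and> wa' \<le> cc \<and> wa' - ar < cc - cb)"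
          using regs w cw True by (intro conjI exI[of _ c] exI[of _ wa]) auto
        then show ?thesis using k by (intro conjI WI_I[OF C]) (use B in auto)
      next
        case nv: False
        have regs: "imem ?s' (2,12) = 0" "imem ?s' (2,10) = 0" "imem ?s' (2,9) = int c"
          using f0 \<open>imem s (2,10) = 0\<close> w(1) cv False nv B(3,4) unfolding WB_def Rc_def by auto
        have "imem ?s' (2,12) = 0 \<and> imem ?s' (2,10) = 0 \<and> (\<exists>wa'. imem ?s' (2,9) = int wa' \<and> cb < wa' \<and> wa' \<le> cc \<and> v < wa'
            \<and> set (chR cb wa') \<subseteq> set (chR cb cc) \<and> rootR cb wa' = r \<and> 2 * wa' + 1 < k - 1)"
          using regs w cw nv ch by (intro conjI exI[of _ c]) auto
        then show ?thesis using k by (intro conjI WI_I[OF C]) (use B in auto)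
      qed
    qed
  next
    case False
    then have kd: "imem s (2,10) = 1" using I f0 unfolding WI_def by auto
    then obtain wa where w: "imem s (2,9) = int wa" "v < wa" "wa < cc"
      "set (chP cb wa) \<subseteq> set (chR cb cc)" "2 * wa < k"
      using I f0 unfolding WI_def by auto
    have k: "0 < k" using w by simp
    have cbw: "cb < wa" using w(2) B(11) by simp
    define c where "c = snd (D 2 cb wa)"
    have cv: "imem s (Pc cb wa) = int c" using R0 cbw w(3) B(10) unfolding ROWS_def tabP_def c_def by simp
    have Pp: "cb \<le> c \<and> c < wa" using P_props[OF cbw] c_def by blast
    have ch: "chP cb wa = chP cb c @ [Some (tree c wa)]" using chP_split[OF cbw] c_def by simp
    note C = common[OF w(1) less_imp_le[OF less_le_trans[OF w(3) B(10)]]]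
    show ?thesis
    proof (cases "c \<le> v")
      case True
      have regs: "imem ?s' (2,12) = 1" "imem ?s' (2,3) = int c" "imem ?s' (2,9) = int wa"
        using f0 kd w(1) cv True B(3,4) unfolding WB_def Pc_def by auto
      have "Some (tree c wa) \<in> set (chR cb cc)" using w(4) ch by auto
      then have "imem ?s' (2,12) = 1 \<and> (\<exists>ar wa'. imem ?s' (2,3) = int ar \<and> imem ?s' (2,9) = int wa'
            \<and> Some (tree ar wa') \<in> set (chR cb cc) \<and> ar \<le> v \<and> v < wa' \<and> cb \<le> ar \<and> wa' \<le> cc \<and> wa' - ar < cc - cb)"
        using regs w Pp True by (intro conjI exI[of _ c] exI[of _ wa]) auto
      then show ?thesis using k by (intro conjI WI_I[OF C]) (use B in auto)
    next
      case nv: False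
      have regs: "imem ?s' (2,12) = 0" "imem ?s' (2,10) = 1" "imem ?s' (2,9) = int c"
        using f0 kd w(1) cv nv B(3,4) unfolding WB_def Pc_def by auto
      have "imem ?s' (2,12) = 0 \<and> imem ?s' (2,10) = 1 \<and> (\<exists>wa'. imem ?s' (2,9) = int wa' \<and> v < wa' \<and> wa' < cc
            \<and> set (chP cb wa') \<subseteq> set (chR cb cc) \<and> 2 * wa' < k - 1)"
        using regs w Pp nv ch by (intro conjI exI[of _ c]) auto
      then show ?thesis using k by (intro conjI WI_I[OF C]) (use B in auto)
    qed
  qed
qed

end


abbreviation gd :: bexp where "gd \<equiv> ILe (ireg 11) (IC 0)"
abbreviation gv :: bexp where "gv \<equiv> ILe (inc (ireg 4)) pp"

definition DR :: com where
  "DR = If (ILe (ireg 6) (inc (ireg 5))) (iset 8 (ireg 5)) (iset 8 (IL (ngt (ireg 5)) (pos (ireg 6))))"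
definition DThen :: com where "DThen = Seq (IStore (IC 1) (ireg 4) (ireg 7)) (iset 11 (IC 1))"
definition WPre :: com where "WPre = Seq (iset 9 (ireg 6)) (Seq (iset 10 (IC 0)) (iset 12 (IC 0)))"
definition WPost :: com where "WPost = Seq (iset 7 (ireg 8)) (Seq (iset 5 (ireg 3)) (iset 6 (ireg 9)))"
definition DB :: com where
  "DB = Seq DR (If (isEq (ireg 8) (ireg 4)) DThen (Seq WPre (Seq (While gw WB) WPost)))"
definition VPre :: com where
  "VPre = Seq (iset 5 (IC 0)) (Seq (iset 6 pp) (Seq (iset 7 (IC (-1))) (iset 11 (IC 0))))"
definition VInc :: com where "VInc = iset 4 (inc (ireg 4))"
definition VB :: com where "VB = Seq VPre (Seq (While gd DB) VInc)"
definition REC :: com where "REC = Seq (iset 4 (IC 0)) (While gv VB)"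

context M begin

definition LW :: nat where "LW = (2 * p + 2) * (slc WB + 1 + bcost gw) + 1 + bcost gw"
definition nD2 :: nat where "nD2 = slc DThen + (slc WPre + (LW + slc WPost))"
definition nD :: nat where "nD = slc DR + (1 + bcost (isEq (ireg 8) (ireg 4)) + nD2)"
definition LD :: nat where "LD = Suc p * (nD + 1 + bcost gd) + 1 + bcost gd"
definition nV :: nat where "nV = slc VPre + (LD + slc VInc)"
definition LV :: nat where "LV = p * (nV + 1 + bcost gv) + 1 + bcost gv"

definition DI :: "nat \<Rightarrow> nat \<Rightarrow> state \<Rightarrow> bool" where
  "DI v k s \<longleftrightarrow> rbase s \<and> OUT s v \<and> v < p \<and> imem s (2,4) = int v \<and>
    ((imem s (2,11) = 1 \<and> good v (imem s (1, int v))) \<or>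
     (imem s (2,11) = 0 \<and> (\<exists>cb cc. imem s (2,5) = int cb \<and> imem s (2,6) = int cc \<and> cb \<le> v \<and> v < cc \<and> cc \<le> p
        \<and> cc - cb < k \<and> ct_edges (tree cb cc) \<subseteq> ct_edges T0 \<and> good (ct_root (tree cb cc)) (imem s (2,7)))))"

lemma W_loop: "WI v cb cc par r k s \<Longrightarrow> bval gw s \<Longrightarrow> 0 < k \<and> tot WB s (WI v cb cc par r (k - 1)) (slc WB)"
  using W_step[of v cb cc par r k s] by (auto intro!: tot_sl simp: WB_def)

lemma D_step: "DI v k s \<Longrightarrow> bval gd s \<Longrightarrow> 0 < k \<and> tot DB s (DI v (k - 1)) nD"
proof -
  assume I: "DI v k s" and g: "bval gd s"
  have B: "rbase s" "OUT s v" "v < p" "imem s (2,4) = int v" using I unfolding DI_def by auto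
  have d0: "imem s (2,11) = 0" using I g unfolding DI_def by auto
  then obtain cb cc where c: "imem s (2,5) = int cb" "imem s (2,6) = int cc" "cb \<le> v" "v < cc" "cc \<le> p"
    "cc - cb < k" "ct_edges (tree cb cc) \<subseteq> ct_edges T0" "good (ct_root (tree cb cc)) (imem s (2,7))"
    using I unfolding DI_def by auto
  have k: "0 < k" using c by simp
  have us: "used s" and R0: "ROWS s 0" using B(1) unfolding rbase_def base_def by auto
  define r where "r = ct_root (tree cb cc)"
  define par where "par = imem s (2,7)"
  let ?s1 = "sl DR s"
  have rv: "imem ?s1 (2,8) = int r"
  proof (cases "cc \<le> Suc cb")
    case True then show ?thesis using c unfolding DR_def r_def tree_root by simp
  next
    case False
    then have "tabR s cb cc" using R0 c(5) unfolding ROWS_def by simp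
    then show ?thesis using c False unfolding DR_def r_def tree_root tabR_def Fc_def by simp
  qed
  have fr1: "frO s ?s1" unfolding frO_def DR_def by simp
  have u1: "used ?s1" using us unfolding used_def IU_def DR_def by simp
  have rb1: "rbase ?s1" by (rule frO_rbase[OF fr1 u1 B(1)])
  have regs1: "\<forall>j. j \<noteq> 8 \<longrightarrow> imem ?s1 (2,j) = imem s (2,j)" "\<forall>w. imem ?s1 (1,w) = imem s (1,w)"
    unfolding DR_def by simp_all
  have OUT1: "OUT ?s1 v" using B(2) regs1 unfolding OUT_def by simp
  have "tot DB s (DI v (k - 1)) nD"
    unfolding DB_def nD_def
  proof (rule tot_seq'[where QQ = "\<lambda>s'. s' = ?s1"])
    show "tot DR s (\<lambda>s'. s' = ?s1) (slc DR)" by (rule tot_sl) (simp_all add: DR_def)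
  next
    fix s1 assume s1: "s1 = ?s1"
    show "tot (If (isEq (ireg 8) (ireg 4)) DThen (Seq WPre (Seq (While gw WB) WPost))) s1 (DI v (k - 1))
       (1 + bcost (isEq (ireg 8) (ireg 4)) + nD2)"
    proof (rule tot_If)
      assume "bval (isEq (ireg 8) (ireg 4)) s1"
      then have rv': "r = v" using s1 rv regs1 B(4) by auto
      let ?s2 = "sl DThen s1"
      have fr2: "frO s1 ?s2" unfolding frO_def DThen_def by simp
      have u2: "used ?s2" using u1 s1 regs1 B(3,4) unfolding used_def IU_def DThen_def by simp
      have "DI v (k - 1) ?s2"
        unfolding DI_def
      proof (intro conjI disjI1)
        show "rbase ?s2" using frO_rbase[OF fr2 u2] rb1 s1 by simp
        show "OUT ?s2 v" using OUT1 s1 regs1 B(4) unfolding OUT_def DThen_def by simp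
        show "v < p" by (rule B(3))
        show "imem ?s2 (2,4) = int v" using s1 regs1 B(4) unfolding DThen_def by simp
        show "imem ?s2 (2,11) = 1" unfolding DThen_def by simp
        show "good v (imem ?s2 (1, int v))" using s1 regs1 B(4) c(8) rv' unfolding DThen_def r_def by simp
      qed
      then show "tot DThen s1 (DI v (k - 1)) nD2"
        by (intro tot_sl) (simp_all add: DThen_def nD2_def)
    next
      assume ne: "\<not> bval (isEq (ireg 8) (ireg 4)) s1"
      then have rv': "r \<noteq> v" using s1 rv regs1 B(4) by auto
      have cbc: "Suc cb < cc" using rv' c(3,4) unfolding r_def tree_root by (auto split: if_splits)
      have rR: "r = rootR cb cc" using cbc unfolding r_def tree_root by simp
      let ?s2 = "sl WPre s1"
      have fr2: "frO s1 ?s2" unfolding frO_def WPre_def by simp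
      have u2: "used ?s2" using u1 s1 unfolding used_def IU_def WPre_def by simp
      have X1: "rbase ?s2 \<and> OUT ?s2 v \<and> imem ?s2 (2,4) = int v \<and> imem ?s2 (2,5) = int cb
          \<and> imem ?s2 (2,6) = int cc \<and> imem ?s2 (2,7) = par \<and> imem ?s2 (2,8) = int r \<and> imem ?s2 (2,11) = 0"
          using frO_rbase[OF fr2 u2] rb1 s1 OUT1 regs1 B(4) c(1,2) d0 rv unfolding OUT_def WPre_def par_def by simp
      have X2: "Suc cb < cc \<and> cc \<le> p \<and> cb \<le> v \<and> v < cc \<and> r = rootR cb cc \<and> v \<noteq> r"
          using cbc c rR rv' by auto
      have X3: "imem ?s2 (2,12) = 0 \<and> imem ?s2 (2,10) = 0 \<and> (\<exists>wa. imem ?s2 (2,9) = int wa \<and> cb < wa \<and> wa \<le> cc \<and> v < wa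
            \<and> set (chR cb wa) \<subseteq> set (chR cb cc) \<and> rootR cb wa = r \<and> 2 * wa + 1 < 2 * cc + 2)"
          using s1 regs1 c(2) rR cbc c(4) unfolding WPre_def by auto
      have WI2: "WI v cb cc par r (2 * cc + 2) ?s2" by (rule WI_I[OF X1 X2 disjI1[OF X3]])
      show "tot (Seq WPre (Seq (While gw WB) WPost)) s1 (DI v (k - 1)) nD2"
        unfolding nD2_def
      proof (rule tot_mono[where n = "slc WPre + (LW + slc WPost)"])
        show "tot (Seq WPre (Seq (While gw WB) WPost)) s1 (DI v (k - 1)) (slc WPre + (LW + slc WPost))"
        proof (rule tot_seq'[where QQ = "\<lambda>s'. s' = ?s2"])
          show "tot WPre s1 (\<lambda>s'. s' = ?s2) (slc WPre)" by (rule tot_sl) (simp_all add: WPre_def)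
        next
          fix s2 assume s2: "s2 = ?s2"
          show "tot (Seq (While gw WB) WPost) s2 (DI v (k - 1)) (LW + slc WPost)"
          proof (rule tot_seq'[where QQ = "\<lambda>s. \<exists>j. WI v cb cc par r j s \<and> \<not> bval gw s"])
            show "tot (While gw WB) s2 (\<lambda>s'. \<exists>j. WI v cb cc par r j s' \<and> \<not> bval gw s') LW"
              unfolding LW_def by (rule tot_while'[OF W_loop WI2[folded s2]]) (use c(5) in auto)
          next
            fix s3 assume "\<exists>j. WI v cb cc par r j s3 \<and> \<not> bval gw s3"
            then obtain j where W3: "WI v cb cc par r j s3" and g3: "\<not> bval gw s3" by blast
            from W3 g3 obtain ar wa where aw: "imem s3 (2,3) = int ar" "imem s3 (2,9) = int wa"
              "Some (tree ar wa) \<in> set (chR cb cc)" "ar \<le> v" "v < wa" "cb \<le> ar" "wa \<le> cc" "wa - ar < cc - cb"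
              unfolding WI_def by auto
            have B3: "rbase s3" "OUT s3 v" "imem s3 (2,4) = int v" "imem s3 (2,8) = int r" "imem s3 (2,11) = 0"
              using W3 unfolding WI_def by auto
            have us3: "used s3" using B3(1) unfolding rbase_def base_def by simp
            let ?s4 = "sl WPost s3"
            have fr4: "frO s3 ?s4" unfolding frO_def WPost_def by simp
            have u4: "used ?s4" using us3 unfolding used_def IU_def WPost_def by simp
            have ce: "(ct_root (tree ar wa), r) \<in> ct_edges (tree cb cc)" "ct_edges (tree ar wa) \<subseteq> ct_edges (tree cb cc)"
              using child_edges[OF cbc aw(3)] rR by auto
            have p0: "0 < p" using B(3) by simp
            have wf0: "ct_wf T0" using tree_props(1)[of 0 p] p0 unfolding T0_def by simp
            have E: "(ct_root (tree ar wa), r) \<in> ct_edges T0" using ce(1) c(7) by auto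
            have nr: "ct_root (tree ar wa) \<noteq> ct_root T0" using edges_root[OF wf0 E] by simp
            have gd4: "good (ct_root (tree ar wa)) (int r)" using E nr unfolding good_def by simp
            have Y1: "rbase ?s4" by (rule frO_rbase[OF fr4 u4 B3(1)])
            have Y2: "OUT ?s4 v" using B3(2) unfolding OUT_def WPost_def by simp
            have Y3: "imem ?s4 (2,4) = int v" using B3(3) unfolding WPost_def by simp
            have Y4: "imem ?s4 (2,11) = 0 \<and> (\<exists>cb cc. imem ?s4 (2,5) = int cb \<and> imem ?s4 (2,6) = int cc \<and> cb \<le> v \<and> v < cc \<and> cc \<le> p
                \<and> cc - cb < k - 1 \<and> ct_edges (tree cb cc) \<subseteq> ct_edges T0 \<and> good (ct_root (tree cb cc)) (imem ?s4 (2,7)))"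
                using B3(4,5) aw c(5,6,7) ce(2) gd4 unfolding WPost_def
                by (intro conjI exI[of _ ar] exI[of _ wa]) auto
            have "DI v (k - 1) ?s4" unfolding DI_def using Y1 Y2 Y3 Y4 B(3) by blast
            then show "tot WPost s3 (DI v (k - 1)) (slc WPost)" by (intro tot_sl) (simp_all add: WPost_def)
          qed
        qed
      qed simp_all
    qed
  qed
  then show ?thesis using k by simp
qed

end


definition prog :: com where "prog = Seq PRE (Seq DP REC)"

context M begin

definition VI :: "nat \<Rightarrow> state \<Rightarrow> bool" where
  "VI k s \<longleftrightarrow> rbase s \<and> (\<exists>v. imem s (2,4) = int v \<and> v \<le> p \<and> k = p - v \<and> OUT s v)"

lemma V_step: "VI k s \<Longrightarrow> bval gv s \<Longrightarrow> 0 < k \<and> tot VB s (VI (k - 1)) nV"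
proof -
  assume I: "VI k s" and g: "bval gv s"
  from I obtain v where v: "imem s (2,4) = int v" "v \<le> p" "k = p - v" "OUT s v" and B: "rbase s"
    unfolding VI_def by blast
  have us: "used s" using B unfolding rbase_def base_def by simp
  have pp: "imem s (0,0) = int p" using B unfolding rbase_def base_def inp_def by simp
  have vp: "v < p" using g v(1) pp by simp
  have k: "0 < k" using vp v(3) by simp
  let ?s1 = "sl VPre s"
  have fr1: "frO s ?s1" unfolding frO_def VPre_def by simp
  have u1: "used ?s1" using us unfolding used_def IU_def VPre_def by simp
  have p0: "0 < p" using vp by simp
  have gr: "good (ct_root (tree 0 p)) (-1)" unfolding good_def T0_def by simp
  have DI1: "DI v (Suc p) ?s1"
  proof -
    have "rbase ?s1" by (rule frO_rbase[OF fr1 u1 B])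
    moreover have "OUT ?s1 v" using v(4) unfolding OUT_def VPre_def by simp
    moreover have "imem ?s1 (2,11) = 0 \<and> (\<exists>cb cc. imem ?s1 (2,5) = int cb \<and> imem ?s1 (2,6) = int cc \<and> cb \<le> v \<and> v < cc \<and> cc \<le> p
        \<and> cc - cb < Suc p \<and> ct_edges (tree cb cc) \<subseteq> ct_edges T0 \<and> good (ct_root (tree cb cc)) (imem ?s1 (2,7)))"
      using pp vp gr unfolding VPre_def T0_def by (intro conjI exI[of _ 0] exI[of _ p]) auto
    moreover have "imem ?s1 (2,4) = int v" using v(1) unfolding VPre_def by simp
    ultimately show ?thesis unfolding DI_def using vp by blast
  qed
  have "tot VB s (VI (k - 1)) nV"
    unfolding VB_def nV_def
  proof (rule tot_seq'[where QQ = "\<lambda>s'. s' = ?s1"])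
    show "tot VPre s (\<lambda>s'. s' = ?s1) (slc VPre)" by (rule tot_sl) (simp_all add: VPre_def)
  next
    fix s1 assume s1: "s1 = ?s1"
    show "tot (Seq (While gd DB) VInc) s1 (VI (k - 1)) (LD + slc VInc)"
    proof (rule tot_seq'[where QQ = "\<lambda>s. \<exists>j. DI v j s \<and> \<not> bval gd s"])
      show "tot (While gd DB) s1 (\<lambda>s. \<exists>j. DI v j s \<and> \<not> bval gd s) LD"
        unfolding LD_def by (rule tot_while'[OF D_step DI1[folded s1]]) auto
    next
      fix s2 assume "\<exists>j. DI v j s2 \<and> \<not> bval gd s2"
      then obtain j where D2: "DI v j s2" "\<not> bval gd s2" by blast
      have gv2: "good v (imem s2 (1, int v))" and B2: "rbase s2" "OUT s2 v" "imem s2 (2,4) = int v"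
        using D2 unfolding DI_def by auto
      have us2: "used s2" using B2 unfolding rbase_def base_def by simp
      let ?s3 = "sl VInc s2"
      have fr3: "frO s2 ?s3" unfolding frO_def VInc_def by simp
      have u3: "used ?s3" using us2 unfolding used_def IU_def VInc_def by simp
      have "VI (k - 1) ?s3"
        unfolding VI_def
      proof (intro conjI exI[of _ "Suc v"])
        show "rbase ?s3" by (rule frO_rbase[OF fr3 u3 B2(1)])
        show "imem ?s3 (2,4) = int (Suc v)" using B2(3) unfolding VInc_def by simp
        show "Suc v \<le> p" using vp by simp
        show "k - 1 = p - Suc v" using v(3) by simp
        show "OUT ?s3 (Suc v)" using B2(2) gv2 unfolding OUT_def VInc_def using less_Suc_eq by auto
      qed
      then show "tot VInc s2 (VI (k - 1)) (slc VInc)" by (intro tot_sl) (simp_all add: VInc_def)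
    qed
  qed
  then show ?thesis using k by simp
qed

lemma REC_ok: "rbase s \<Longrightarrow> tot REC s (\<lambda>s. rbase s \<and> OUT s p) (slc (iset 4 (IC 0)) + LV)"
proof -
  assume B: "rbase s"
  let ?s1 = "sl (iset 4 (IC 0)) s"
  have fr: "frO s ?s1" unfolding frO_def by simp
  have u: "used ?s1" using B unfolding rbase_def base_def used_def IU_def by simp
  have VI1: "VI p ?s1" using frO_rbase[OF fr u B] unfolding VI_def OUT_def by simp
  show ?thesis unfolding REC_def
  proof (rule tot_seq'[where QQ = "VI p"])
    show "tot (iset 4 (IC 0)) s (VI p) (slc (iset 4 (IC 0)))" by (rule tot_sl) (use VI1 in simp_all)
  next
    fix s1 assume s1: "VI p s1"
    show "tot (While gv VB) s1 (\<lambda>s. rbase s \<and> OUT s p) LV"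
      unfolding LV_def
    proof (rule tot_while'[OF V_step s1])
      fix j s assume a: "VI j s" "\<not> bval gv s"
      then obtain v where v: "imem s (2,4) = int v" "v \<le> p" "OUT s v" and R: "rbase s" unfolding VI_def by blast
      have "imem s (0,0) = int p" using R unfolding rbase_def base_def inp_def by simp
      then have "v = p" using a(2) v(1,2) by simp
      then show "rbase s \<and> OUT s p" using R v(3) by simp
    qed auto
  qed
qed

definition LPRE :: nat where
  "LPRE = p * (slc PREbody + 1 + bcost (ILe (inc (ireg 11)) pp)) + 1 + bcost (ILe (inc (ireg 11)) pp)"

lemma PRE_ok: "inp s \<Longrightarrow> used s \<Longrightarrow> tot PRE s base (slc (RStore (IC 2) (IC 0) (RC 0)) + (slc (iset 11 (IC 0)) + LPRE))"
proof -
  assume i: "inp s" and u: "used s"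
  let ?s1 = "sl (RStore (IC 2) (IC 0) (RC 0)) s"
  let ?s2 = "sl (iset 11 (IC 0)) ?s1"
  have PI2: "PI p ?s2" using i u unfolding PI_def inp_def used_def IU_def RU_def Sok_def by (simp add: S_0)
  show ?thesis unfolding PRE_def
  proof (rule tot_seq'[where QQ = "\<lambda>s'. s' = ?s1"])
    show "tot (RStore (IC 2) (IC 0) (RC 0)) s (\<lambda>s'. s' = ?s1) (slc (RStore (IC 2) (IC 0) (RC 0)))"
      by (rule tot_sl) simp_all
  next
    fix s1 assume s1: "s1 = ?s1"
    show "tot (Seq (iset 11 (IC 0)) (While (ILe (inc (ireg 11)) pp) PREbody)) s1 base (slc (iset 11 (IC 0)) + LPRE)"
    proof (rule tot_seq'[where QQ = "PI p"])
      show "tot (iset 11 (IC 0)) s1 (PI p) (slc (iset 11 (IC 0)))" by (rule tot_sl) (use PI2 s1 in simp_all)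
    next
      fix s2 assume s2: "PI p s2"
      show "tot (While (ILe (inc (ireg 11)) pp) PREbody) s2 base LPRE"
        unfolding LPRE_def
      proof (rule tot_mono[OF PRE_loop[OF s2]])
        fix s assume "\<exists>j. PI j s \<and> \<not> bval (ILe (inc (ireg 11)) pp) s"
        then obtain j jj where a: "PI j s" "\<not> bval (ILe (inc (ireg 11)) pp) s"
          "imem s (2,11) = int jj" "jj \<le> p" "Sok s jj" "inp s" "used s" unfolding PI_def by blast
        have "imem s (0,0) = int p" using a(6) unfolding inp_def by simp
        then have "jj = p" using a(2,3,4) by simp
        then show "base s" using a unfolding base_def by simp
      qed simp
    qed
  qed
qed

definition TOTAL :: nat where
  "TOTAL = (slc (RStore (IC 2) (IC 0) (RC 0)) + (slc (iset 11 (IC 0)) + LPRE))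
     + ((slc (iset 0 (dec pp)) + LI) + (slc (iset 4 (IC 0)) + LV))"

lemma prog_ok: "inp s \<Longrightarrow> used s \<Longrightarrow> tot prog s (\<lambda>s. used s \<and> OUT s p) TOTAL"
proof -
  assume i: "inp s" and u: "used s"
  show ?thesis unfolding prog_def TOTAL_def
  proof (rule tot_seq'[OF PRE_ok[OF i u]])
    fix s1 assume "base s1"
    show "tot (Seq DP REC) s1 (\<lambda>s. used s \<and> OUT s p) (slc (iset 0 (dec pp)) + LI + (slc (iset 4 (IC 0)) + LV))"
    proof (rule tot_seq'[OF DP_ok[OF \<open>base s1\<close>]])
      fix s2 assume "base s2 \<and> ROWS s2 0"
      then have "rbase s2" unfolding rbase_def by simp
      show "tot REC s2 (\<lambda>s. used s \<and> OUT s p) (slc (iset 4 (IC 0)) + LV)"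
        by (rule tot_mono[OF REC_ok[OF \<open>rbase s2\<close>]]) (auto simp: rbase_def base_def)
    qed
  qed
qed

lemma TOTAL_bound: "0 < p \<Longrightarrow> TOTAL \<le> 10000 * p ^ 3"
proof -
  assume p: "0 < p"
  have a: "p \<le> p ^ 3" "p * p \<le> p ^ 3" "1 \<le> p ^ 3" "p * (p * p) = p ^ 3"
    using p by (simp_all add: power3_eq_cube)
  show ?thesis
    unfolding TOTAL_def LPRE_def LI_def nI_def LA_def nA_def LR_def LP_def LV_def nV_def LD_def nD_def nD2_def LW_def
    unfolding PREbody_def RB_def PB_def maxcand_def upd_def PreR_def Mid_def PostP_def IPre_def IPost_def
      WB_def DThen_def WPre_def WPost_def DR_def VPre_def VInc_def
    using a by (simp add: algebra_simps)
qed

end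


context M begin

lemma card_IU: "card IU \<le> 17 + 7 * p + 3 * (p * p)"
proof -
  define A where "A = {10..10 + int p}"
  define B where "B = {-10 - int p..-10}"
  have cA: "card A = p + 1" "card B = p + 1" unfolding A_def B_def by simp_all
  have IU: "IU = {(0,0)} \<union> ({1} \<times> {0..<int p}) \<union> ({2} \<times> {0..12}) \<union> (A \<times> A) \<union> (A \<times> B) \<union> (B \<times> A)"
    unfolding IU_def A_def B_def by simp
  have "card IU \<le> card {(0::int,0::int)} + card ({1::int} \<times> {0..<int p}) + card ({2::int} \<times> {0..12::int})
      + card (A \<times> A) + card (A \<times> B) + card (B \<times> A)"
    unfolding IU by (intro order_trans[OF card_Un_le] add_mono order_refl)+
  also have "\<dots> = 14 + p + 3 * ((p + 1) * (p + 1))" by (simp add: card_cartesian_product cA)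
  also have "\<dots> = 17 + 7 * p + 3 * (p * p)" by (simp add: algebra_simps)
  finally show ?thesis .
qed

lemma card_RU: "card RU \<le> 11 + 8 * p + 3 * (p * p)"
proof -
  define A where "A = {10..10 + int p}"
  define B where "B = {-10 - int p..-10}"
  have cA: "card A = p + 1" "card B = p + 1" unfolding A_def B_def by simp_all
  have RU: "RU = ({0} \<times> {0..<int p}) \<union> ({1} \<times> {0..2}) \<union> ({2} \<times> {0..int p}) \<union> ({3} \<times> {0..3})
     \<union> (A \<times> A) \<union> (A \<times> B) \<union> (B \<times> A)"
    unfolding RU_def A_def B_def by simp
  have "card RU \<le> card ({0::int} \<times> {0..<int p}) + card ({1::int} \<times> {0..2::int}) + card ({2::int} \<times> {0..int p})
      + card ({3::int} \<times> {0..3::int}) + card (A \<times> A) + card (A \<times> B) + card (B \<times> A)"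
    unfolding RU by (intro order_trans[OF card_Un_le] add_mono order_refl)+
  also have "\<dots> = 7 + p + (p + 1) + 3 * ((p + 1) * (p + 1))" by (simp add: card_cartesian_product cA)
  also have "\<dots> = 11 + 8 * p + 3 * (p * p)" by (simp add: algebra_simps)
  finally show ?thesis .
qed

lemma fin_IU: "finite IU" unfolding IU_def by simp
lemma fin_RU: "finite RU" unfolding RU_def by simp

lemma space_bound: "0 < p \<Longrightarrow> used s \<Longrightarrow> space s \<le> 10000 * p ^ 2"
proof -
  assume p: "0 < p" and u: "used s"
  have "card (iused s) \<le> card IU" using u fin_IU unfolding used_def by (intro card_mono) auto
  moreover have "card (rused s) \<le> card RU" using u fin_RU unfolding used_def by (intro card_mono) auto
  moreover have "1 \<le> p * p" "p \<le> p * p" using p by simp_all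
  ultimately have "space s \<le> 10000 * (p * p)" using card_IU card_RU unfolding space_def by linarith
  then show ?thesis by (simp add: power2_eq_square)
qed

lemma input_ok: "inp (input_state p m \<alpha> \<beta> \<gamma>)" "used (input_state p m \<alpha> \<beta> \<gamma>)"
  unfolding inp_def used_def input_state_def IU_def RU_def by auto

end

theorem theorem2:
  "\<exists>(prog :: com) (c :: nat).
     \<forall>(p :: nat) (m :: nat \<Rightarrow> real) (\<alpha> :: real) (\<beta> :: real) (\<gamma> :: real).
       p \<ge> 1 \<and> (\<forall>i<p. m i \<ge> 0) \<and> \<alpha> \<ge> 0 \<and> \<beta> \<ge> 0 \<and> \<gamma> \<ge> 0 \<longrightarrow>
       (\<exists>t s'. exec prog (input_state p m \<alpha> \<beta> \<gamma>) t s'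
          \<and> t \<le> c * p ^ 3 \<and> space s' \<le> c * p ^ 2
          \<and> (\<exists>T. is_ctree {0..<p} T \<and> strongly_ordered T \<and> outputs_tree p s' T
                 \<and> (\<forall>T'. is_ctree {0..<p} T' \<and> strongly_ordered T' \<longrightarrow>
                          ct_cost m \<alpha> \<beta> \<gamma> T \<le> ct_cost m \<alpha> \<beta> \<gamma> T')))"
proof (rule exI[of _ prog], rule exI[of _ 10000], intro allI impI)
  fix p :: nat and m :: "nat \<Rightarrow> real" and \<alpha> \<beta> \<gamma> :: real
  assume H: "p \<ge> 1 \<and> (\<forall>i<p. m i \<ge> 0) \<and> \<alpha> \<ge> 0 \<and> \<beta> \<ge> 0 \<and> \<gamma> \<ge> 0"
  interpret M m \<alpha> \<beta> \<gamma> p .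
  have p0: "0 < p" using H by simp
  obtain t s' where ex: "exec prog (input_state p m \<alpha> \<beta> \<gamma>) t s'" "t \<le> TOTAL" "used s'" "OUT s' p"
    using prog_ok[OF input_ok] unfolding tot_def by blast
  have c1: "t \<le> 10000 * p ^ 3" using ex(2) TOTAL_bound[OF p0] by simp
  have c2: "space s' \<le> 10000 * p ^ 2" by (rule space_bound[OF p0 ex(3)])
  have tp: "ct_verts T0 = {0..<p}" "ct_wf T0" "strongly_ordered T0" "ct_cost m \<alpha> \<beta> \<gamma> T0 \<le> fst (D 1 0 p)"
    using tree_props(1)[of 0 p] p0 unfolding T0_def by auto
  have c3: "is_ctree {0..<p} T0" using tp unfolding is_ctree_def by simp
  have c4: "outputs_tree p s' T0" using ex(4) unfolding outputs_tree_def OUT_def good_def by simp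
  have c5: "\<forall>T'. is_ctree {0..<p} T' \<and> strongly_ordered T' \<longrightarrow> ct_cost m \<alpha> \<beta> \<gamma> T0 \<le> ct_cost m \<alpha> \<beta> \<gamma> T'"
  proof (intro allI impI)
    fix T' assume T': "is_ctree {0..<p} T' \<and> strongly_ordered T'"
    have "fst (D 1 0 p) \<le> ct_cost m \<alpha> \<beta> \<gamma> T'"
      using lower[of T' 0 p] T' p0 unfolding is_ctree_def by simp
    then show "ct_cost m \<alpha> \<beta> \<gamma> T0 \<le> ct_cost m \<alpha> \<beta> \<gamma> T'" using tp(4) by simp
  qed
  show "\<exists>t s'. exec prog (input_state p m \<alpha> \<beta> \<gamma>) t s'
          \<and> t \<le> 10000 * p ^ 3 \<and> space s' \<le> 10000 * p ^ 2
          \<and> (\<exists>T. is_ctree {0..<p} T \<and> strongly_ordered T \<and> outputs_tree p s' T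
                 \<and> (\<forall>T'. is_ctree {0..<p} T' \<and> strongly_ordered T' \<longrightarrow>
                          ct_cost m \<alpha> \<beta> \<gamma> T \<le> ct_cost m \<alpha> \<beta> \<gamma> T'))"
    using ex(1) c1 c2 c3 tp(3) c4 c5 by blast
qed


end
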